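(* In the $\beta$-model, if $b_n^2/c_n=o\big(\sqrt{n/\log n}\big)$, then for all sufficiently large $n$, with probability at least $1-2/n$, the MLE $\hat{\boldsymbol\beta}$ exists and $$\|\hat{\boldsymbol\beta}-\boldsymbol\beta\|_2\le C\,b_n(\log n)^{1/2}$$ for an absolute constant $C$.
   Context: All quantities may depend on $n$; asymptotics are as $n\to\infty$. $\beta$-model: for $\boldsymbol\beta\in\mathbb R^n$, $a_{ii}=0$, $a_{ji}=a_{ij}$, and $a_{ij}$ ($1\le i<j\le n$) independent Bernoulli with $P(a_{ij}=1)=e^{\beta_i+\beta_j}/(1+e^{\beta_i+\beta_j})$; $d_i=\sum_{j\ne i}a_{ij}$; $\ell(\boldsymbol\gamma)=\sum_i\gamma_id_i-\sum_{i<j}\log(1+e^{\gamma_i+\gamma_j})$; $\hat{\boldsymbol\beta}$ maximizes $\ell$ over $\mathbb R^n$. $b_n=\max_{i\ne j}(1+e^{\beta_i+\beta_j})^2/e^{\beta_i+\beta_j}$, $c_n=\min_{i\ne j}(1+e^{\beta_i+\beta_j})^2/e^{\beta_i+\beta_j}$. $\|\cdot\|_2$ is the Euclidean norm. *)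

theory Defs
  imports Complex_Main "HOL-Library.Landau_Symbols"
begin

text \<open>The beta-model on vertex set {0..<n}. A parameter vector is a function
  nat => real of which only the values at i < n matter. A graph is a set E of
  unordered pairs encoded as (i,j) with i < j < n.\<close>

definition pairs :: "nat \<Rightarrow> (nat \<times> nat) set" where
  "pairs n = {(i, j). i < j \<and> j < n}"

definition edge_prob :: "(nat \<Rightarrow> real) \<Rightarrow> nat \<Rightarrow> nat \<Rightarrow> real" where
  "edge_prob \<beta> i j = exp (\<beta> i + \<beta> j) / (1 + exp (\<beta> i + \<beta> j))"

definition graph_prob :: "nat \<Rightarrow> (nat \<Rightarrow> real) \<Rightarrow> (nat \<times> nat) set \<Rightarrow> real" where
  "graph_prob n \<beta> E =
     (\<Prod>(i, j)\<in>pairs n. if (i, j) \<in> E then edge_prob \<beta> i j else 1 - edge_prob \<beta> i j)"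

definition beta_prob :: "nat \<Rightarrow> (nat \<Rightarrow> real) \<Rightarrow> ((nat \<times> nat) set \<Rightarrow> bool) \<Rightarrow> real" where
  "beta_prob n \<beta> P = (\<Sum>E\<in>{E. E \<subseteq> pairs n \<and> P E}. graph_prob n \<beta> E)"

definition degree :: "nat \<Rightarrow> (nat \<times> nat) set \<Rightarrow> nat \<Rightarrow> nat" where
  "degree n E i = card {j. j < n \<and> j \<noteq> i \<and> ((i, j) \<in> E \<or> (j, i) \<in> E)}"

definition loglik :: "nat \<Rightarrow> (nat \<times> nat) set \<Rightarrow> (nat \<Rightarrow> real) \<Rightarrow> real" where
  "loglik n E \<gamma> = (\<Sum>i<n. \<gamma> i * real (degree n E i))
      - (\<Sum>(i, j)\<in>pairs n. ln (1 + exp (\<gamma> i + \<gamma> j)))"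

definition is_MLE :: "nat \<Rightarrow> (nat \<times> nat) set \<Rightarrow> (nat \<Rightarrow> real) \<Rightarrow> bool" where
  "is_MLE n E \<gamma> \<longleftrightarrow> (\<forall>\<delta>. loglik n E \<delta> \<le> loglik n E \<gamma>)"

definition l2dist :: "nat \<Rightarrow> (nat \<Rightarrow> real) \<Rightarrow> (nat \<Rightarrow> real) \<Rightarrow> real" where
  "l2dist n x y = sqrt (\<Sum>i<n. (x i - y i)^2)"

definition b_n :: "nat \<Rightarrow> (nat \<Rightarrow> real) \<Rightarrow> real" where
  "b_n n \<beta> = Max {(1 + exp (\<beta> i + \<beta> j))^2 / exp (\<beta> i + \<beta> j) | i j. i < n \<and> j < n \<and> i \<noteq> j}"

definition c_n :: "nat \<Rightarrow> (nat \<Rightarrow> real) \<Rightarrow> real" where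
  "c_n n \<beta> = Min {(1 + exp (\<beta> i + \<beta> j))^2 / exp (\<beta> i + \<beta> j) | i j. i < n \<and> j < n \<and> i \<noteq> j}"

end

theory Submission
  imports Defs "HOL-Analysis.Analysis"
begin


definition psi :: "real \<Rightarrow> real" where "psi x = ln (1 + exp x)"
definition pp :: "real \<Rightarrow> real" where "pp x = exp x / (1 + exp x)"
definition vv :: "real \<Rightarrow> real" where "vv x = exp x / (1 + exp x)^2"

lemma psi_deriv: "(psi has_real_derivative pp x) (at x)"
  unfolding psi_def pp_def
  by (rule derivative_eq_intros refl | simp add: add_pos_pos)+

lemma pp_deriv: "(pp has_real_derivative vv x) (at x)"
  unfolding pp_def vv_def
  apply (rule derivative_eq_intros refl | simp)+
   apply (smt (verit) exp_gt_zero)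
  apply (simp add: power2_eq_square algebra_simps)
  done

lemma pp_pos: "0 < pp x" and pp_lt1: "pp x < 1"
  unfolding pp_def by (auto simp: add_pos_pos)

lemma onepexp: "0 < 1 + exp (x::real)" by (simp add: add_pos_pos)

lemma vv_pos: "0 < vv x" unfolding vv_def using onepexp[of x] by simp

lemma vv_le: "vv x \<le> 1/4"
proof -
  have "4 * exp x \<le> (1 + exp x)^2"
    using sum_squares_ge_zero[of "1 - exp x" 0]
    by (simp add: power2_eq_square algebra_simps)
  then show ?thesis unfolding vv_def using onepexp[of x] by (simp add: divide_le_eq)
qed

lemma vv_ratio: "vv (s + x) \<ge> vv s * exp (- \<bar>x\<bar>)"
proof -
  have e: "exp (s + x) = exp s * exp x" by (simp add: exp_add)
  have p1: "0 < 1 + exp s * exp x" by (simp add: add_pos_pos)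
  have p2: "0 < exp x * (1 + exp s)" using onepexp[of s] by simp
  show ?thesis
  proof (cases "x \<ge> 0")
    case True
    have "1 + exp s * exp x \<le> exp x * (1 + exp s)" using True by (simp add: algebra_simps)
    then have h: "(1 + exp s * exp x)^2 \<le> (exp x * (1 + exp s))^2"
      by (intro power_mono) (auto simp: add_pos_pos intro: add_nonneg_nonneg)
    have "vv s * exp (- \<bar>x\<bar>) = exp s * exp x / (exp x * (1 + exp s))^2"
      using True by (simp add: vv_def exp_minus power2_eq_square divide_simps)
    also have "\<dots> \<le> exp s * exp x / (1 + exp s * exp x)^2"
        by (rule divide_left_mono[OF h], simp, rule mult_pos_pos[OF zero_less_power[OF p2] zero_less_power[OF p1]])
    finally show ?thesis by (simp add: vv_def e)
  next
    case False
    have "1 + exp s * exp x \<le> 1 + exp s" using False by simp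
    then have h: "(1 + exp s * exp x)^2 \<le> (1 + exp s)^2"
      by (intro power_mono) (auto intro: add_nonneg_nonneg)
    have "vv s * exp (- \<bar>x\<bar>) = exp s * exp x / (1 + exp s)^2"
      using False by (simp add: vv_def)
    also have "\<dots> \<le> exp s * exp x / (1 + exp s * exp x)^2"
        by (rule divide_left_mono[OF h], simp, rule mult_pos_pos[OF zero_less_power[OF onepexp] zero_less_power[OF p1]])
    finally show ?thesis by (simp add: vv_def e)
  qed
qed

lemma deriv_lower:
  fixes f f' :: "real \<Rightarrow> real"
  assumes "a \<le> b" "\<And>x. a \<le> x \<Longrightarrow> x \<le> b \<Longrightarrow> (f has_real_derivative f' x) (at x)"
    "\<And>x. a \<le> x \<Longrightarrow> x \<le> b \<Longrightarrow> L \<le> f' x"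
  shows "L * (b - a) \<le> f b - f a"
proof (cases "a = b")
  case False
  then have "a < b" using assms by simp
  from MVT2[OF this assms(2)] obtain z where "a < z" "z < b" "f b - f a = (b - a) * f' z" by auto
  with assms(3)[of z] \<open>a < b\<close> show ?thesis by (simp add: mult.commute mult_left_mono)
qed simp

lemma deriv_upper:
  fixes f f' :: "real \<Rightarrow> real"
  assumes "a \<le> b" "\<And>x. a \<le> x \<Longrightarrow> x \<le> b \<Longrightarrow> (f has_real_derivative f' x) (at x)"
    "\<And>x. a \<le> x \<Longrightarrow> x \<le> b \<Longrightarrow> f' x \<le> U"
  shows "f b - f a \<le> U * (b - a)"
proof (cases "a = b")
  case False
  then have "a < b" using assms by simp
  from MVT2[OF this assms(2)] obtain z where "a < z" "z < b" "f b - f a = (b - a) * f' z" by auto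
  with assms(3)[of z] \<open>a < b\<close> show ?thesis by (simp add: mult.commute mult_left_mono)
qed simp

lemma pp_mono: "x \<le> y \<Longrightarrow> pp x \<le> pp y"
  using deriv_lower[of x y pp vv 0] pp_deriv vv_pos by (fastforce intro: less_imp_le)

lemma pp_lip: "x \<le> y \<Longrightarrow> pp y - pp x \<le> (y - x) / 4"
  using deriv_upper[of x y pp vv "1/4"] pp_deriv vv_le by fastforce

lemma pp_incr: assumes "0 \<le> x" shows "x * (vv s * exp (- x)) \<le> pp (s + x) - pp s"
proof -
  have "\<And>y. s \<le> y \<Longrightarrow> y \<le> s + x \<Longrightarrow> vv s * exp (- x) \<le> vv y"
  proof -
    fix y assume "s \<le> y" "y \<le> s + x"
    have "vv s * exp (- x) \<le> vv s * exp (- \<bar>y - s\<bar>)"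
      using \<open>s \<le> y\<close> \<open>y \<le> s + x\<close> by (intro mult_left_mono) (auto simp: vv_pos less_imp_le)
    also have "\<dots> \<le> vv y" using vv_ratio[of s "y - s"] by simp
    finally show "vv s * exp (- x) \<le> vv y" .
  qed
  then show ?thesis using deriv_lower[of s "s + x" pp vv "vv s * exp (- x)"] pp_deriv assms by (auto simp: algebra_simps)
qed

lemma pp_decr: assumes "0 \<le> x" shows "x * (vv s * exp (- x)) \<le> pp s - pp (s - x)"
proof -
  have "\<And>y. s - x \<le> y \<Longrightarrow> y \<le> s \<Longrightarrow> vv s * exp (- x) \<le> vv y"
  proof -
    fix y assume "s - x \<le> y" "y \<le> s"
    have "vv s * exp (- x) \<le> vv s * exp (- \<bar>y - s\<bar>)"
      using \<open>s - x \<le> y\<close> \<open>y \<le> s\<close> by (intro mult_left_mono) (auto simp: vv_pos less_imp_le)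
    also have "\<dots> \<le> vv y" using vv_ratio[of s "y - s"] by simp
    finally show "vv s * exp (- x) \<le> vv y" .
  qed
  then show ?thesis using deriv_lower[of "s - x" s pp vv "vv s * exp (- x)"] pp_deriv assms by (auto simp: algebra_simps)
qed

lemma psi_low: "0 \<le> th \<Longrightarrow> th * pp (c - th) \<le> psi c - psi (c - th)"
  using deriv_lower[of "c - th" c psi pp "pp (c - th)"] psi_deriv pp_mono by (auto simp: algebra_simps)

lemma psi_up: "0 \<le> th \<Longrightarrow> psi (c + th) - psi c \<le> th * pp (c + th)"
  using deriv_upper[of c "c + th" psi pp "pp (c + th)"] psi_deriv pp_mono by (auto simp: mult.commute)

definition DD :: "real \<Rightarrow> real \<Rightarrow> real" where
  "DD s a = psi (s + a) - psi s - a * pp s"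

lemma DD_quad:
  assumes "\<bar>a\<bar> \<le> r"
  shows "vv s * exp (- r) * a^2 / 2 \<le> DD s a"
proof -
  define k where "k = vv s * exp (- r)"
  define G where "G x = psi (s + x) - psi s - x * pp s - k * x^2 / 2" for x
  define G' where "G' x = pp (s + x) - pp s - k * x" for x
  have dG: "(G has_real_derivative G' x) (at x)" for x
    unfolding G_def G'_def
    by (rule derivative_eq_intros refl DERIV_chain2[OF psi_deriv] | simp)+
  have k0: "0 \<le> k" unfolding k_def by (simp add: vv_pos less_imp_le)
  show ?thesis
  proof (cases "a \<ge> 0")
    case True
    have "\<And>x. 0 \<le> x \<Longrightarrow> x \<le> a \<Longrightarrow> 0 \<le> G' x"
    proof -
      fix x assume x: "0 \<le> x" "x \<le> a"
      have "k \<le> vv s * exp (- x)" unfolding k_def using x assms True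
        by (intro mult_left_mono) (auto simp: vv_pos less_imp_le)
      then have "x * k \<le> x * (vv s * exp (- x))" using x by (simp add: mult_left_mono)
      then show "0 \<le> G' x" using pp_incr[OF x(1), of s] unfolding G'_def by (simp add: mult.commute)
    qed
    then have "0 * (a - 0) \<le> G a - G 0" using deriv_lower[of 0 a G G' 0] dG True by auto
    then show ?thesis by (simp add: G_def DD_def k_def)
  next
    case False
    have "\<And>x. a \<le> x \<Longrightarrow> x \<le> 0 \<Longrightarrow> G' x \<le> 0"
    proof -
      fix x assume x: "a \<le> x" "x \<le> 0"
      have "k \<le> vv s * exp (- (-x))" unfolding k_def using x assms False
        by (intro mult_left_mono) (auto simp: vv_pos less_imp_le)
      then have "(-x) * k \<le> (-x) * (vv s * exp (- (-x)))" using x by (intro mult_left_mono) auto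
      then show "G' x \<le> 0" using pp_decr[of "-x" s] x unfolding G'_def by (simp add: mult.commute)
    qed
    then have "G 0 - G a \<le> 0 * (0 - a)" using deriv_upper[of a 0 G G' 0] dG False by auto
    then show ?thesis by (simp add: G_def DD_def k_def)
  qed
qed


lemma expm1: "1/3 \<le> exp (-1::real)"
  using exp_le by (simp add: exp_minus field_simps)

lemma expm2: "1/9 \<le> exp (-2::real)"
proof -
  have "exp (-2::real) = exp (-1) * exp (-1)" by (simp flip: exp_add)
  then show ?thesis using expm1 mult_mono[OF expm1 expm1] by simp
qed

definition mm :: "real \<Rightarrow> real" where "mm a = min (a^2) \<bar>a\<bar>"

lemma DD_deriv: "((DD s) has_real_derivative (pp (s + x) - pp s)) (at x)"
  unfolding DD_def by (rule derivative_eq_intros refl DERIV_chain2[OF psi_deriv] | simp)+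

lemma DD_one: "vv s / 6 \<le> DD s 1" "vv s / 6 \<le> DD s (-1)"
proof -
  have h: "vv s * exp (- 1) * 1 / 2 \<le> DD s 1" "vv s * exp (- 1) * 1 / 2 \<le> DD s (-1)"
    using DD_quad[of 1 1 s] DD_quad[of "-1" 1 s] by auto
  have "vv s / 6 \<le> vv s * exp (- 1) * 1 / 2" using expm1 vv_pos[of s] by simp
  then show "vv s / 6 \<le> DD s 1" "vv s / 6 \<le> DD s (-1)" using h by linarith+
qed

lemma DD_m: "vv s * mm a / 6 \<le> DD s a"
proof (cases "\<bar>a\<bar> \<le> 1")
  case True
  have "vv s * exp (- 1) * a^2 / 2 \<le> DD s a" using DD_quad[OF True] .
  moreover have "vv s * mm a / 6 \<le> vv s * exp (- 1) * a^2 / 2"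
  proof -
    have "mm a \<le> a^2" unfolding mm_def by simp
    then have "vv s * mm a / 6 \<le> vv s * a^2 / 6" using vv_pos[of s] by (simp add: mult_left_mono)
    also have "\<dots> \<le> vv s * exp (- 1) * a^2 / 2"
    proof -
      have e3: "1 \<le> 3 * exp (-1::real)" using expm1 by simp
      have "a^2 * 1 \<le> a^2 * (3 * exp (-1))" by (rule mult_left_mono[OF e3]) simp
      then have "vv s * (a^2 * 1) \<le> vv s * (a^2 * (3 * exp (-1)))"
        by (rule mult_left_mono[OF _ less_imp_le[OF vv_pos]])
      then show ?thesis by (simp add: mult_ac)
    qed
    finally show ?thesis .
  qed
  ultimately show ?thesis by linarith
next
  case False
  have "\<bar>a\<bar> * 1 \<le> \<bar>a\<bar> * \<bar>a\<bar>" using False by (intro mult_left_mono) auto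
  then have mma: "mm a = \<bar>a\<bar>" unfolding mm_def by (simp add: power2_eq_square abs_mult_self_eq)
  show ?thesis
  proof (cases "a \<ge> 0")
    case True
    define H where "H x = DD s x - x * DD s 1" for x
    have dH: "(H has_real_derivative (pp (s + x) - pp s - DD s 1)) (at x)" for x
      unfolding H_def by (rule derivative_eq_intros refl DD_deriv | simp)+
    have up: "DD s 1 \<le> pp (s + 1) - pp s" using psi_up[of 1 s] by (simp add: DD_def)
    have "0 * (a - 1) \<le> H a - H 1"
    proof (rule deriv_lower[of 1 a H "\<lambda>x. pp (s + x) - pp s - DD s 1" 0])
      show "1 \<le> a" using False True by simp
      show "(H has_real_derivative pp (s + x) - pp s - DD s 1) (at x)" for x :: real by (rule dH)
      fix x :: real assume "1 \<le> x" then show "0 \<le> pp (s + x) - pp s - DD s 1"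
        using pp_mono[of "s + 1" "s + x"] up by simp
    qed
    then have "a * DD s 1 \<le> DD s a" by (simp add: H_def)
    moreover have "a * (vv s / 6) \<le> a * DD s 1" using DD_one(1)[of s] True by (rule mult_left_mono)
    ultimately show ?thesis using mma True by (simp add: mult.commute)
  next
    case neg: False
    define H where "H x = DD s x + x * DD s (-1)" for x
    have dH: "(H has_real_derivative (pp (s + x) - pp s + DD s (-1))) (at x)" for x
      unfolding H_def by (rule derivative_eq_intros refl DD_deriv | simp)+
    have up: "DD s (-1) \<le> pp s - pp (s - 1)" using psi_low[of 1 s] by (simp add: DD_def)
    have "H (-1) - H a \<le> 0 * (-1 - a)"
    proof (rule deriv_upper[of a "-1" H "\<lambda>x. pp (s + x) - pp s + DD s (-1)" 0])
      show "a \<le> -1" using False neg by simp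
      show "(H has_real_derivative pp (s + x) - pp s + DD s (-1)) (at x)" for x :: real by (rule dH)
      fix x :: real assume "x \<le> -1" then show "pp (s + x) - pp s + DD s (-1) \<le> 0"
        using pp_mono[of "s + x" "s - 1"] up by simp
    qed
    then have "(-a) * DD s (-1) \<le> DD s a" by (simp add: H_def)
    moreover have "(-a) * (vv s / 6) \<le> (-a) * DD s (-1)" by (rule mult_left_mono[OF DD_one(2)]) (use neg in simp)
    moreover have "vv s * mm a / 6 = (-a) * (vv s / 6)" using mma neg by simp
    ultimately show ?thesis by linarith
  qed
qed


lemma finite_pairs: "finite (pairs n)"
  by (rule finite_subset[of _ "{..<n} \<times> {..<n}"]) (auto simp: pairs_def)

lemma pairs_Suc: "pairs (Suc n) = pairs n \<union> (\<lambda>i. (i, n)) ` {..<n}"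
  by (auto simp: pairs_def less_Suc_eq)

lemma key_sum:
  fixes G :: "nat \<Rightarrow> nat \<Rightarrow> real"
  shows "(\<Sum>i<n. \<Sum>j<n. G i j) = (\<Sum>(i, j)\<in>pairs n. G i j + G j i) + (\<Sum>i<n. G i i)"
proof (induction n)
  case 0
  then show ?case by (simp add: pairs_def)
next
  case (Suc n)
  have disj: "pairs n \<inter> (\<lambda>i. (i, n)) ` {..<n} = {}" by (auto simp: pairs_def)
  have inj: "inj_on (\<lambda>i. (i, n)) {..<n}" by (auto simp: inj_on_def)
  have "(\<Sum>(i, j)\<in>pairs (Suc n). G i j + G j i)
      = (\<Sum>(i, j)\<in>pairs n. G i j + G j i) + (\<Sum>(i, j)\<in>(\<lambda>i. (i, n)) ` {..<n}. G i j + G j i)"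
    unfolding pairs_Suc by (rule sum.union_disjoint) (auto simp: finite_pairs disj)
  also have "(\<Sum>(i, j)\<in>(\<lambda>i. (i, n)) ` {..<n}. G i j + G j i) = (\<Sum>i<n. G i n + G n i)"
    by (subst sum.reindex[OF inj]) simp
  finally have P: "(\<Sum>(i, j)\<in>pairs (Suc n). G i j + G j i)
      = (\<Sum>(i, j)\<in>pairs n. G i j + G j i) + (\<Sum>i<n. G i n + G n i)" .
  have "(\<Sum>i<Suc n. \<Sum>j<Suc n. G i j) = (\<Sum>i<n. \<Sum>j<n. G i j) + (\<Sum>i<n. G i n) + (\<Sum>j<n. G n j) + G n n"
    by (simp add: sum.distrib)
  then show ?case using Suc P by (simp add: sum.distrib)
qed

lemma key_sym:
  fixes G :: "nat \<Rightarrow> nat \<Rightarrow> real"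
  assumes "\<And>i j. G i j = G j i"
  shows "(\<Sum>(i, j)\<in>pairs n. G i j) = ((\<Sum>i<n. \<Sum>j<n. G i j) - (\<Sum>i<n. G i i)) / 2"
proof -
  have "(\<Sum>(i, j)\<in>pairs n. G i j + G j i) = (\<Sum>(i, j)\<in>pairs n. 2 * G i j)"
    by (rule sum.cong) (auto simp: assms)
  moreover have "(\<Sum>(i, j)\<in>pairs n. 2 * G i j) = 2 * (\<Sum>(i, j)\<in>pairs n. G i j)"
    by (subst sum_distrib_left) (simp add: case_prod_unfold)
  ultimately show ?thesis using key_sum[of G n] by simp
qed

lemma star_sum:
  fixes F :: "nat \<Rightarrow> nat \<Rightarrow> real"
  assumes sym: "\<And>k l. F k l = F l k" and i: "i < n"
  shows "(\<Sum>(k, l)\<in>pairs n. if k = i \<or> l = i then F k l else 0) = (\<Sum>l<n. if l \<noteq> i then F i l else 0)"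
proof -
  define G where "G k l = (if k = i \<and> l \<noteq> i then F k l else 0)" for k l
  have "(\<Sum>k<n. \<Sum>l<n. G k l) = (\<Sum>l<n. if l \<noteq> i then F i l else 0)"
  proof -
    have "(\<Sum>k<n. \<Sum>l<n. G k l) = (\<Sum>k<n. if k = i then (\<Sum>l<n. if l \<noteq> i then F i l else 0) else 0)"
      by (rule sum.cong) (auto simp: G_def)
    also have "\<dots> = (\<Sum>l<n. if l \<noteq> i then F i l else 0)" using i by (simp add: sum.delta)
    finally show ?thesis .
  qed
  moreover have "(\<Sum>(k, l)\<in>pairs n. G k l + G l k) = (\<Sum>(k, l)\<in>pairs n. if k = i \<or> l = i then F k l else 0)"
    by (rule sum.cong) (auto simp: G_def pairs_def sym)
  moreover have "(\<Sum>k<n. G k k) = 0" by (simp add: G_def)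
  ultimately show ?thesis using key_sum[of G n] by simp
qed


lemma mm_nonneg: "0 \<le> mm a" unfolding mm_def by simp

lemma mm_mono: "\<bar>x\<bar> \<le> \<bar>y\<bar> \<Longrightarrow> mm x \<le> mm y"
  unfolding mm_def using abs_le_square_iff[of x y] by (intro min.mono) auto

lemma mm_3: assumes "0 \<le> M" shows "mm (3 * M) \<le> 9 * mm M"
proof -
  have a: "mm (3 * M) \<le> 9 * M^2" unfolding mm_def by (simp add: power_mult_distrib)
  have b: "mm (3 * M) \<le> 9 * M" unfolding mm_def using assms by simp
  have "9 * mm M = min (9 * M^2) (9 * M)" unfolding mm_def using assms by (simp add: min_def)
  then show ?thesis using a b by simp
qed

lemma mm_tri:
  assumes "\<bar>u\<bar> \<le> \<bar>a\<bar> + \<bar>b\<bar> + \<bar>c\<bar>"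
  shows "mm u \<le> 9 * (mm a + mm b + mm c)"
proof -
  define M where "M = max \<bar>a\<bar> (max \<bar>b\<bar> \<bar>c\<bar>)"
  have "\<bar>a\<bar> \<le> M" "\<bar>b\<bar> \<le> M" "\<bar>c\<bar> \<le> M" unfolding M_def by auto
  then have "\<bar>u\<bar> \<le> \<bar>3 * M\<bar>" using assms by linarith
  then have "mm u \<le> mm (3 * M)" by (rule mm_mono)
  also have "\<dots> \<le> 9 * mm M" by (rule mm_3) (simp add: M_def)
  also have "mm M \<le> mm a + mm b + mm c"
  proof -
    have "mm M = mm a \<or> mm M = mm b \<or> mm M = mm c"
      unfolding M_def mm_def by (auto simp: max_def)
    then show ?thesis using mm_nonneg[of a] mm_nonneg[of b] mm_nonneg[of c] by auto
  qed
  finally show ?thesis by simp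
qed

lemma mm_half: "1/2 \<le> \<bar>x\<bar> \<Longrightarrow> \<bar>x\<bar> / 2 \<le> mm x"
proof -
  assume h: "1/2 \<le> \<bar>x\<bar>"
  have "\<bar>x\<bar> * (1/2) \<le> \<bar>x\<bar> * \<bar>x\<bar>" using h by (intro mult_left_mono) auto
  then show ?thesis unfolding mm_def using h by (simp add: power2_eq_square abs_mult_self_eq)
qed

lemma mm_double: "mm (2 * x) \<le> 4 * mm x"
  unfolding mm_def by (auto simp: min_def power2_eq_square)

lemma triple_sum:
  fixes d :: "nat \<Rightarrow> real"
  shows "real n * (\<Sum>i<n. mm (d i)) \<le> 27 * (\<Sum>j<n. \<Sum>k<n. mm (d j + d k))"
proof -
  have pt: "mm (d i) \<le> 9 * (mm (d i + d j) + mm (d i + d k) + mm (d j + d k))" for i j k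
    by (rule mm_tri) linarith
  let ?O = "\<Sum>j<n. \<Sum>k<n. mm (d j + d k)"
  have "(\<Sum>i<n. \<Sum>j<n. \<Sum>k<n. mm (d i)) \<le>
        (\<Sum>i<n. \<Sum>j<n. \<Sum>k<n. 9 * (mm (d i + d j) + mm (d i + d k) + mm (d j + d k)))"
    by (intro sum_mono pt)
  also have "\<dots> = 9 * ((\<Sum>i<n. \<Sum>j<n. \<Sum>k<n. mm (d i + d j)) + (\<Sum>i<n. \<Sum>j<n. \<Sum>k<n. mm (d i + d k))
        + (\<Sum>i<n. \<Sum>j<n. \<Sum>k<n. mm (d j + d k)))"
    by (simp add: sum.distrib sum_distrib_left mult_ac)
  also have "(\<Sum>i<n. \<Sum>j<n. \<Sum>k<n. mm (d i + d j)) = real n * ?O"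
    by (simp add: sum_distrib_left mult.commute)
  also have "(\<Sum>i<n. \<Sum>j<n. \<Sum>k<n. mm (d i + d k)) = real n * ?O"
    by (simp add: sum_distrib_left mult_ac)
  also have "(\<Sum>i<n. \<Sum>j<n. \<Sum>k<n. mm (d j + d k)) = real n * ?O"
    by simp
  finally have "(\<Sum>i<n. \<Sum>j<n. \<Sum>k<n. mm (d i)) \<le> 27 * (real n * ?O)" by simp
  moreover have "(\<Sum>i<n. \<Sum>j<n. \<Sum>k<n. mm (d i)) = real n * (real n * (\<Sum>i<n. mm (d i)))"
    by (simp add: sum_distrib_left mult.commute)
  ultimately have "real n * (real n * (\<Sum>i<n. mm (d i))) \<le> real n * (27 * ?O)" by simp
  then show ?thesis by (cases "n = 0") auto
qed

lemma quad_sum: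
  fixes d :: "nat \<Rightarrow> real"
  shows "(\<Sum>i<n. \<Sum>j<n. (d i + d j)^2) = 2 * real n * (\<Sum>i<n. (d i)^2) + 2 * (\<Sum>i<n. d i)^2"
proof -
  have "(\<Sum>i<n. \<Sum>j<n. (d i + d j)^2) = (\<Sum>i<n. \<Sum>j<n. (d i)^2 + (d j)^2 + 2 * d i * d j)"
    by (simp add: power2_eq_square algebra_simps)
  also have "\<dots> = (\<Sum>i<n. real n * (d i)^2 + (\<Sum>j<n. (d j)^2) + 2 * d i * (\<Sum>j<n. d j))"
    by (simp add: sum.distrib sum_distrib_left)
  also have "\<dots> = real n * (\<Sum>i<n. (d i)^2) + real n * (\<Sum>j<n. (d j)^2) + (\<Sum>i<n. 2 * d i * (\<Sum>j<n. d j))"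
    by (simp add: sum.distrib sum_distrib_left)
  also have "(\<Sum>i<n. 2 * d i * (\<Sum>j<n. d j)) = 2 * (\<Sum>i<n. d i) * (\<Sum>j<n. d j)"
    by (simp add: sum_distrib_left sum_distrib_right mult_ac)
  finally show ?thesis by (simp add: power2_eq_square)
qed


definition ee :: "(nat \<times> nat) set \<Rightarrow> nat \<Rightarrow> nat \<Rightarrow> real" where
  "ee E k l = (if (k, l) \<in> E \<or> (l, k) \<in> E then 1 else 0)"

lemma ee_sym: "ee E k l = ee E l k" unfolding ee_def by auto

definition gg :: "nat \<Rightarrow> (nat \<times> nat) set \<Rightarrow> (nat \<Rightarrow> real) \<Rightarrow> nat \<Rightarrow> real" where
  "gg n E \<beta> i = (\<Sum>l<n. if l \<noteq> i then ee E i l - pp (\<beta> i + \<beta> l) else 0)"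

lemma degree_sum: "real (Defs.degree n E i) = (\<Sum>l<n. if l \<noteq> i then ee E i l else 0)"
proof -
  have "(\<Sum>l<n. if l \<noteq> i then ee E i l else 0)
      = (\<Sum>l\<in>{..<n}. if l \<in> {j. j < n \<and> j \<noteq> i \<and> ((i, j) \<in> E \<or> (j, i) \<in> E)} then 1 else 0)"
    by (rule sum.cong) (auto simp: ee_def)
  also have "\<dots> = real (card ({..<n} \<inter> {j. j < n \<and> j \<noteq> i \<and> ((i, j) \<in> E \<or> (j, i) \<in> E)}))"
    by (subst sum.If_cases) auto
  also have "{..<n} \<inter> {j. j < n \<and> j \<noteq> i \<and> ((i, j) \<in> E \<or> (j, i) \<in> E)} = {j. j < n \<and> j \<noteq> i \<and> ((i, j) \<in> E \<or> (j, i) \<in> E)}"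
    by auto
  finally show ?thesis unfolding Defs.degree_def by simp
qed

lemma loglik_pairs:
  "loglik n E \<gamma> = (\<Sum>(k, l)\<in>pairs n. (\<gamma> k + \<gamma> l) * ee E k l - psi (\<gamma> k + \<gamma> l))"
proof -
  define G where "G i l = (if l \<noteq> i then \<gamma> i * ee E i l else 0)" for i l
  have "(\<Sum>i<n. \<gamma> i * real (Defs.degree n E i)) = (\<Sum>i<n. \<Sum>l<n. G i l)"
    by (simp add: degree_sum sum_distrib_left G_def if_distrib cong: if_cong)
  also have "\<dots> = (\<Sum>(k, l)\<in>pairs n. G k l + G l k) + (\<Sum>i<n. G i i)" by (rule key_sum)
  also have "(\<Sum>(k, l)\<in>pairs n. G k l + G l k) = (\<Sum>(k, l)\<in>pairs n. (\<gamma> k + \<gamma> l) * ee E k l)"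
    by (rule sum.cong) (auto simp: G_def pairs_def algebra_simps ee_sym[of E _ k for k])
  finally have 1: "(\<Sum>i<n. \<gamma> i * real (Defs.degree n E i)) = (\<Sum>(k, l)\<in>pairs n. (\<gamma> k + \<gamma> l) * ee E k l)"
    by (simp add: G_def)
  show ?thesis unfolding loglik_def 1 psi_def
    by (simp add: sum_subtractf case_prod_unfold)
qed

lemma loglik_diff:
  fixes \<beta> \<gamma> :: "nat \<Rightarrow> real"
  defines "d \<equiv> \<lambda>i. \<gamma> i - \<beta> i"
  shows "loglik n E \<gamma> - loglik n E \<beta> =
    (\<Sum>i<n. d i * gg n E \<beta> i) - (\<Sum>(k, l)\<in>pairs n. DD (\<beta> k + \<beta> l) (d k + d l))"
proof -
  have "loglik n E \<gamma> - loglik n E \<beta> =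
     (\<Sum>(k, l)\<in>pairs n. (d k + d l) * (ee E k l - pp (\<beta> k + \<beta> l)) - DD (\<beta> k + \<beta> l) (d k + d l))"
    unfolding loglik_pairs sum_subtractf[symmetric]
    by (rule sum.cong) (auto simp: d_def DD_def algebra_simps)
  also have "\<dots> = (\<Sum>(k, l)\<in>pairs n. (d k + d l) * (ee E k l - pp (\<beta> k + \<beta> l)))
      - (\<Sum>(k, l)\<in>pairs n. DD (\<beta> k + \<beta> l) (d k + d l))"
    by (simp add: sum_subtractf case_prod_unfold)
  also have "(\<Sum>(k, l)\<in>pairs n. (d k + d l) * (ee E k l - pp (\<beta> k + \<beta> l))) = (\<Sum>i<n. d i * gg n E \<beta> i)"
  proof -
    define G where "G i l = (if l \<noteq> i then d i * (ee E i l - pp (\<beta> i + \<beta> l)) else 0)" for i l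
    have "(\<Sum>i<n. d i * gg n E \<beta> i) = (\<Sum>i<n. \<Sum>l<n. G i l)"
      by (simp add: gg_def sum_distrib_left G_def if_distrib cong: if_cong)
    also have "\<dots> = (\<Sum>(k, l)\<in>pairs n. G k l + G l k) + (\<Sum>i<n. G i i)" by (rule key_sum)
    also have "(\<Sum>(k, l)\<in>pairs n. G k l + G l k) = (\<Sum>(k, l)\<in>pairs n. (d k + d l) * (ee E k l - pp (\<beta> k + \<beta> l)))"
      by (rule sum.cong) (auto simp: G_def pairs_def algebra_simps ee_sym[of E _ k for k])
    finally show ?thesis by (simp add: G_def)
  qed
  finally show ?thesis .
qed


definition bset :: "nat \<Rightarrow> (nat \<Rightarrow> real) \<Rightarrow> real set" where
  "bset n \<beta> = {(1 + exp (\<beta> i + \<beta> j))^2 / exp (\<beta> i + \<beta> j) | i j. i < n \<and> j < n \<and> i \<noteq> j}"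

lemma bset_finite: "finite (bset n \<beta>)"
proof -
  have "bset n \<beta> \<subseteq> (\<lambda>(i, j). (1 + exp (\<beta> i + \<beta> j))^2 / exp (\<beta> i + \<beta> j)) ` ({..<n} \<times> {..<n})"
    unfolding bset_def by auto
  then show ?thesis by (rule finite_subset) auto
qed

lemma four_le: "4 \<le> (1 + exp x)^2 / exp (x::real)"
proof -
  have "4 * exp x \<le> (1 + exp x)^2"
    using sum_squares_ge_zero[of "1 - exp x" 0] by (simp add: power2_eq_square algebra_simps)
  then show ?thesis by (simp add: le_divide_eq)
qed

lemma vv_inv: "vv x = 1 / ((1 + exp x)^2 / exp x)" unfolding vv_def by simp

lemma bb_ge:
  assumes "k < n" "l < n" "k \<noteq> l"
  shows "(1 + exp (\<beta> k + \<beta> l))^2 / exp (\<beta> k + \<beta> l) \<le> b_n n \<beta>"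
    "c_n n \<beta> \<le> (1 + exp (\<beta> k + \<beta> l))^2 / exp (\<beta> k + \<beta> l)"
proof -
  have m: "(1 + exp (\<beta> k + \<beta> l))^2 / exp (\<beta> k + \<beta> l) \<in> bset n \<beta>"
    unfolding bset_def using assms by blast
  show "(1 + exp (\<beta> k + \<beta> l))^2 / exp (\<beta> k + \<beta> l) \<le> b_n n \<beta>"
    using Max_ge[OF bset_finite m] unfolding b_n_def bset_def .
  show "c_n n \<beta> \<le> (1 + exp (\<beta> k + \<beta> l))^2 / exp (\<beta> k + \<beta> l)"
    using Min_le[OF bset_finite m] unfolding c_n_def bset_def .
qed

lemma bb_facts:
  assumes "2 \<le> n"
  shows "4 \<le> b_n n \<beta>" "4 \<le> c_n n \<beta>" "c_n n \<beta> \<le> b_n n \<beta>"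
proof -
  have "(1 + exp (\<beta> 0 + \<beta> 1))^2 / exp (\<beta> 0 + \<beta> 1) \<in> bset n \<beta>"
    unfolding bset_def using assms by force
  then have ne: "bset n \<beta> \<noteq> {}" by auto
  have all4: "\<forall>x\<in>bset n \<beta>. 4 \<le> x" unfolding bset_def using four_le by auto
  show "4 \<le> c_n n \<beta>" using Min_ge_iff[OF bset_finite ne] all4 unfolding c_n_def bset_def by auto
  moreover show "c_n n \<beta> \<le> b_n n \<beta>"
    using Min_le[OF bset_finite \<open>_ \<in> bset n \<beta>\<close>] Max_ge[OF bset_finite \<open>_ \<in> bset n \<beta>\<close>]
    unfolding c_n_def b_n_def bset_def by simp
  ultimately show "4 \<le> b_n n \<beta>" by simp
qed

lemma vv_ge_bb:
  assumes "(k, l) \<in> pairs n"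
  shows "1 / b_n n \<beta> \<le> vv (\<beta> k + \<beta> l)"
proof -
  have "k < n" "l < n" "k \<noteq> l" using assms by (auto simp: pairs_def)
  then have b: "(1 + exp (\<beta> k + \<beta> l))^2 / exp (\<beta> k + \<beta> l) \<le> b_n n \<beta>" by (rule bb_ge)
  have "0 < (1 + exp (\<beta> k + \<beta> l))^2 / exp (\<beta> k + \<beta> l)" using four_le[of "\<beta> k + \<beta> l"] by linarith
  then show ?thesis unfolding vv_inv
    using divide_left_mono[OF b zero_le_one mult_pos_pos[OF less_le_trans[OF \<open>0 < _\<close> b] \<open>0 < _\<close>]] by simp
qed

lemma aux1: fixes x M Ow Dw Pw :: real assumes "Pw = (Ow - Dw)/2" "Dw \<le> 4*M" "x*M \<le> 27*Ow" shows "(x/27 - 4)*M \<le> 2*Pw"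
  using assms by (simp add: algebra_simps)
lemma aux2: fixes x M Ow Dw Pw Q :: real assumes "Pw = (Ow - Dw)/2" "Dw = 4*M" "Ow = 2*x*M + 2*Q" "0 \<le> Q" shows "(x - 2)*M \<le> Pw"
  using assms by (simp add: algebra_simps)

lemma DD_sum_m:
  fixes \<beta> d :: "nat \<Rightarrow> real"
  assumes bb: "0 < b_n n \<beta>"
  shows "(real n / 27 - 4) / (12 * b_n n \<beta>) * (\<Sum>i<n. mm (d i))
      \<le> (\<Sum>(k, l)\<in>pairs n. DD (\<beta> k + \<beta> l) (d k + d l))"
proof -
  let ?b = "b_n n \<beta>"
  have "(\<Sum>(k, l)\<in>pairs n. mm (d k + d l) / (6 * ?b)) \<le> (\<Sum>(k, l)\<in>pairs n. DD (\<beta> k + \<beta> l) (d k + d l))"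
  proof (rule sum_mono, clarify)
    fix k l assume kl: "(k, l) \<in> pairs n"
    have "mm (d k + d l) / (6 * ?b) = (1 / ?b) * mm (d k + d l) / 6" by simp
    also have "\<dots> \<le> vv (\<beta> k + \<beta> l) * mm (d k + d l) / 6"
      using vv_ge_bb[OF kl] mm_nonneg by (intro divide_right_mono mult_right_mono) auto
    also have "\<dots> \<le> DD (\<beta> k + \<beta> l) (d k + d l)" by (rule DD_m)
    finally show "mm (d k + d l) / (6 * ?b) \<le> DD (\<beta> k + \<beta> l) (d k + d l)" .
  qed
  moreover have e1: "(\<Sum>(k, l)\<in>pairs n. mm (d k + d l) / (6 * ?b)) = (\<Sum>(k, l)\<in>pairs n. mm (d k + d l)) / (6 * ?b)"
    by (simp add: sum_divide_distrib case_prod_unfold)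
  moreover have e2: "(\<Sum>(k, l)\<in>pairs n. mm (d k + d l)) = ((\<Sum>i<n. \<Sum>j<n. mm (d i + d j)) - (\<Sum>i<n. mm (d i + d i))) / 2"
    by (rule key_sym) (simp add: add.commute)
  moreover have e3: "(\<Sum>i<n. mm (d i + d i)) \<le> 4 * (\<Sum>i<n. mm (d i))"
    using mm_double by (simp add: sum_distrib_left sum_mono mult_2[symmetric])
  moreover have e4: "real n * (\<Sum>i<n. mm (d i)) \<le> 27 * (\<Sum>j<n. \<Sum>k<n. mm (d j + d k))" by (rule triple_sum)
  moreover have "(real n / 27 - 4) * (\<Sum>i<n. mm (d i)) = real n * (\<Sum>i<n. mm (d i)) / 27 - 4 * (\<Sum>i<n. mm (d i))"
    by (simp add: algebra_simps)
  ultimately have "(real n / 27 - 4) * (\<Sum>i<n. mm (d i)) \<le> 2 * (\<Sum>(k, l)\<in>pairs n. mm (d k + d l))"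
    by (intro aux1[OF e2 e3 e4])
  then have "(real n / 27 - 4) * (\<Sum>i<n. mm (d i)) / (12 * ?b) \<le> 2 * (\<Sum>(k, l)\<in>pairs n. mm (d k + d l)) / (12 * ?b)"
    using bb by (intro divide_right_mono) auto
  also have "\<dots> = (\<Sum>(k, l)\<in>pairs n. mm (d k + d l)) / (6 * ?b)" by simp
  finally show ?thesis using e1 \<open>(\<Sum>(k, l)\<in>pairs n. mm (d k + d l) / (6 * ?b)) \<le> _\<close> by simp
qed

lemma DD_sum_quad:
  fixes \<beta> d :: "nat \<Rightarrow> real"
  assumes bb: "0 < b_n n \<beta>" and d1: "\<And>i. i < n \<Longrightarrow> \<bar>d i\<bar> \<le> 1"
  shows "(real n - 2) / (18 * b_n n \<beta>) * (\<Sum>i<n. (d i)^2)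
      \<le> (\<Sum>(k, l)\<in>pairs n. DD (\<beta> k + \<beta> l) (d k + d l))"
proof -
  let ?b = "b_n n \<beta>"
  have "(\<Sum>(k, l)\<in>pairs n. (d k + d l)^2 / (18 * ?b)) \<le> (\<Sum>(k, l)\<in>pairs n. DD (\<beta> k + \<beta> l) (d k + d l))"
  proof (rule sum_mono, clarify)
    fix k l assume kl: "(k, l) \<in> pairs n"
    then have "k < n" "l < n" by (auto simp: pairs_def)
    then have a2: "\<bar>d k + d l\<bar> \<le> 2" using d1[of k] d1[of l] by linarith
    have "(d k + d l)^2 / (18 * ?b) = (1 / ?b) * (1/9) * (d k + d l)^2 / 2" by simp
    also have "\<dots> \<le> vv (\<beta> k + \<beta> l) * exp (-2) * (d k + d l)^2 / 2"
      using vv_ge_bb[OF kl] expm2 bb vv_pos[of "\<beta> k + \<beta> l"]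
      by (intro divide_right_mono mult_right_mono mult_mono) (auto intro: less_imp_le)
    also have "\<dots> \<le> DD (\<beta> k + \<beta> l) (d k + d l)" by (rule DD_quad[OF a2])
    finally show "(d k + d l)^2 / (18 * ?b) \<le> DD (\<beta> k + \<beta> l) (d k + d l)" .
  qed
  moreover have e1: "(\<Sum>(k, l)\<in>pairs n. (d k + d l)^2 / (18 * ?b)) = (\<Sum>(k, l)\<in>pairs n. (d k + d l)^2) / (18 * ?b)"
    by (simp add: sum_divide_distrib case_prod_unfold)
  moreover have e2: "(\<Sum>(k, l)\<in>pairs n. (d k + d l)^2) = ((\<Sum>i<n. \<Sum>j<n. (d i + d j)^2) - (\<Sum>i<n. (d i + d i)^2)) / 2"
    by (rule key_sym) (simp add: add.commute)
  moreover have e3: "(\<Sum>i<n. (d i + d i)^2) = 4 * (\<Sum>i<n. (d i)^2)"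
    by (simp add: sum_distrib_left power2_eq_square algebra_simps)
  moreover note e4 = quad_sum[of d n]
  moreover have "0 \<le> (\<Sum>i<n. d i)^2" by simp
  moreover have "(real n - 2) * (\<Sum>i<n. (d i)^2) = real n * (\<Sum>i<n. (d i)^2) - 2 * (\<Sum>i<n. (d i)^2)"
    by (simp add: algebra_simps)
  ultimately have "(real n - 2) * (\<Sum>i<n. (d i)^2) \<le> (\<Sum>(k, l)\<in>pairs n. (d k + d l)^2)"
    by (intro aux2[OF e2 e3]) (auto simp: e4)
  then have "(real n - 2) * (\<Sum>i<n. (d i)^2) / (18 * ?b) \<le> (\<Sum>(k, l)\<in>pairs n. (d k + d l)^2) / (18 * ?b)"
    using bb by (intro divide_right_mono) auto
  then show ?thesis using e1 \<open>(\<Sum>(k, l)\<in>pairs n. (d k + d l)^2 / (18 * ?b)) \<le> _\<close> by simp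
qed


lemma w_bounds:
  fixes d g K t :: real
  assumes K: "0 < K" and t: "0 \<le> t" "4 * t \<le> K" and g: "\<bar>g\<bar> \<le> t"
  shows "d * g - K * mm d \<le> K / 64"
    and "1/2 \<le> \<bar>d\<bar> \<Longrightarrow> d * g - K * mm d \<le> - (K / 4) * \<bar>d\<bar>"
proof -
  have dg: "d * g \<le> \<bar>d\<bar> * t"
    using g by (metis abs_ge_self abs_mult abs_ge_zero mult_left_mono order_trans)
  show big: "d * g - K * mm d \<le> - (K / 4) * \<bar>d\<bar>" if h: "1/2 \<le> \<bar>d\<bar>"
  proof -
    have "K * (\<bar>d\<bar> / 2) \<le> K * mm d" using mm_half[OF h] K by (intro mult_left_mono) auto
    moreover have "\<bar>d\<bar> * t \<le> \<bar>d\<bar> * (K / 4)" using t by (intro mult_left_mono) auto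
    ultimately show ?thesis using dg by (simp add: algebra_simps)
  qed
  show "d * g - K * mm d \<le> K / 64"
  proof (cases "1/2 \<le> \<bar>d\<bar>")
    case True
    have "0 \<le> (K / 4) * \<bar>d\<bar>" using K by simp
    then show ?thesis using big[OF True] K by linarith
  next
    case False
    have "\<bar>d\<bar> * \<bar>d\<bar> \<le> \<bar>d\<bar> * 1" using False by (intro mult_left_mono) auto
    then have mmd: "mm d = d^2" unfolding mm_def by (simp add: power2_eq_square abs_mult_self_eq)
    have sq: "0 \<le> (K * \<bar>d\<bar> - t / 2)^2" by simp
    have "\<bar>d\<bar> * t \<le> K * d^2 + t^2 / (4 * K)"
    proof -
      have "0 \<le> (K * \<bar>d\<bar> - t / 2)^2 / K" using sq K by simp
      also have "(K * \<bar>d\<bar> - t / 2)^2 / K = K * d^2 - \<bar>d\<bar> * t + t^2 / (4 * K)"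
        using K by (simp add: power2_eq_square field_simps abs_mult_self_eq)
      finally show ?thesis by simp
    qed
    moreover have "t^2 / (4 * K) \<le> K / 64"
    proof -
      have "t^2 \<le> (K/4)^2" using t by (intro power_mono) auto
      then show ?thesis using K by (simp add: field_simps power2_eq_square)
    qed
    ultimately show ?thesis using dg mmd by simp
  qed
qed

lemma w_lemma:
  fixes d g :: "nat \<Rightarrow> real" and K t :: real
  assumes K: "0 < K" and t: "0 \<le> t" "4 * t \<le> K" and g: "\<And>i. i < n \<Longrightarrow> \<bar>g i\<bar> \<le> t"
    and S: "0 \<le> (\<Sum>i<n. d i * g i - K * mm (d i))"
  shows "9 * card {i. i < n \<and> 1/2 \<le> \<bar>d i\<bar>} \<le> n" and "\<And>i. i < n \<Longrightarrow> \<bar>d i\<bar> < real n"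
proof -
  let ?w = "\<lambda>i. d i * g i - K * mm (d i)"
  define B where "B = {i. i < n \<and> 1/2 \<le> \<bar>d i\<bar>}"
  have B: "B \<subseteq> {..<n}" "finite B" unfolding B_def by auto
  have "(\<Sum>i<n. ?w i) \<le> (\<Sum>i<n. if i \<in> B then - K / 8 else K / 64)"
  proof (rule sum_mono)
    fix i assume "i \<in> {..<n}"
    then have i: "i < n" by simp
    show "?w i \<le> (if i \<in> B then - K / 8 else K / 64)"
    proof (cases "i \<in> B")
      case True
      then have h: "1/2 \<le> \<bar>d i\<bar>" unfolding B_def by simp
      have "- (K / 4) * \<bar>d i\<bar> \<le> - (K / 4) * (1/2)" using h K by (intro mult_left_mono_neg) auto
      then show ?thesis using w_bounds(2)[OF K t g[OF i] h] True by simp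
    qed (use w_bounds(1)[OF K t g[OF i]] in simp)
  qed
  also have "\<dots> = real (card B) * (- K / 8) + real (card ({..<n} - B)) * (K / 64)"
    using B by (simp add: sum.If_cases Int_absorb1 Diff_eq[symmetric])
  also have "card ({..<n} - B) = n - card B" using B by (simp add: card_Diff_subset)
  also have "real (n - card B) = real n - real (card B)"
    using card_mono[OF _ B(1)] by (simp add: of_nat_diff)
  finally have "0 \<le> real (card B) * (- K / 8) + (real n - real (card B)) * (K / 64)" using S by linarith
  then have "0 \<le> K * (real n - 9 * real (card B))" by (simp add: algebra_simps)
  then show "9 * card {i. i < n \<and> 1/2 \<le> \<bar>d i\<bar>} \<le> n" using K unfolding B_def[symmetric]
    by (simp add: zero_le_mult_iff)
  fix i0 assume i0: "i0 < n"
  show "\<bar>d i0\<bar> < real n"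
  proof (rule ccontr)
    assume "\<not> \<bar>d i0\<bar> < real n"
    then have big: "real n \<le> \<bar>d i0\<bar>" by simp
    have n1: "1 \<le> real n" using i0 by simp
    have "(\<Sum>i<n. ?w i) \<le> (\<Sum>i<n. if i = i0 then - (K / 4) * real n else K / 64)"
    proof (rule sum_mono)
      fix i assume "i \<in> {..<n}"
      then have i: "i < n" by simp
      show "?w i \<le> (if i = i0 then - (K / 4) * real n else K / 64)"
      proof (cases "i = i0")
        case True
        have h: "1/2 \<le> \<bar>d i\<bar>" using big n1 True by simp
        have "- (K / 4) * \<bar>d i\<bar> \<le> - (K / 4) * real n" using big True K by (intro mult_left_mono_neg) auto
        then show ?thesis using w_bounds(2)[OF K t g[OF i] h] True by simp
      qed (use w_bounds(1)[OF K t g[OF i]] in simp)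
    qed
    also have "\<dots> = - (K / 4) * real n + (real n - 1) * (K / 64)"
    proof -
      have "(\<Sum>i<n. if i = i0 then - (K / 4) * real n else K / 64)
          = (\<Sum>i<n. (if i = i0 then - (K / 4) * real n - K / 64 else 0) + K / 64)"
        by (rule sum.cong) auto
      also have "\<dots> = - (K / 4) * real n - K / 64 + real n * (K / 64)"
        using i0 by (simp add: sum.distrib)
      finally show ?thesis by (simp add: algebra_simps)
    qed
    finally have "0 \<le> - (K / 4) * real n + (real n - 1) * (K / 64)" using S by linarith
    then have "0 \<le> K * (- 15 * real n - 1)" by (simp add: algebra_simps)
    then show False using K n1 by (simp add: zero_le_mult_iff)
  qed
qed


lemma loglik_upd:
  assumes i: "i < n"
  shows "loglik n E (\<gamma>(i := y)) - loglik n E \<gamma> =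
    (\<Sum>l<n. if l \<noteq> i then ((y + \<gamma> l) * ee E i l - psi (y + \<gamma> l)) - ((\<gamma> i + \<gamma> l) * ee E i l - psi (\<gamma> i + \<gamma> l)) else 0)"
proof -
  let ?g = "\<gamma>(i := y)"
  define F where "F k l = ((?g k + ?g l) * ee E k l - psi (?g k + ?g l)) - ((\<gamma> k + \<gamma> l) * ee E k l - psi (\<gamma> k + \<gamma> l))" for k l
  have sym: "F k l = F l k" for k l unfolding F_def by (simp add: ee_sym[of E k l] add.commute)
  have "loglik n E ?g - loglik n E \<gamma> = (\<Sum>(k, l)\<in>pairs n. F k l)"
    unfolding loglik_pairs F_def by (simp add: sum_subtractf case_prod_unfold)
  also have "\<dots> = (\<Sum>(k, l)\<in>pairs n. if k = i \<or> l = i then F k l else 0)"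
    by (rule sum.cong) (auto simp: F_def)
  also have "\<dots> = (\<Sum>l<n. if l \<noteq> i then F i l else 0)" by (rule star_sum[OF sym i])
  also have "\<dots> = (\<Sum>l<n. if l \<noteq> i then ((y + \<gamma> l) * ee E i l - psi (y + \<gamma> l)) - ((\<gamma> i + \<gamma> l) * ee E i l - psi (\<gamma> i + \<gamma> l)) else 0)"
    by (rule sum.cong) (auto simp: F_def)
  finally show ?thesis .
qed

lemma exp_quarter: "2/3 \<le> exp (- 1/4 :: real)"
proof -
  have "exp (1/4::real) \<le> 3/2" using real_exp_bound_lemma[of "1/4"] by simp
  then show ?thesis by (simp add: exp_minus field_simps)
qed

lemma pp_quarter_up: "0 < b \<Longrightarrow> 1 / b \<le> vv s \<Longrightarrow> 1/4 \<le> x \<Longrightarrow> 1 / (6 * b) \<le> pp (s + x) - pp s"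
proof -
  assume b: "0 < b" "1 / b \<le> vv s" "1/4 \<le> x"
  have "(1/4) * (vv s * exp (- (1/4))) \<le> pp (s + 1/4) - pp s" by (rule pp_incr) simp
  moreover have "pp (s + 1/4) \<le> pp (s + x)" using b by (intro pp_mono) simp
  moreover have "1 / (6 * b) \<le> (1/4) * (vv s * exp (- (1/4)))"
  proof -
    have "1 / (6 * b) = (1/4) * ((1 / b) * (2/3))" by simp
    also have "\<dots> \<le> (1/4) * (vv s * exp (- (1/4)))"
      using b exp_quarter vv_pos[of s] by (intro mult_left_mono mult_mono) auto
    finally show ?thesis .
  qed
  ultimately show ?thesis by linarith
qed

lemma pp_quarter_down: "0 < b \<Longrightarrow> 1 / b \<le> vv s \<Longrightarrow> x \<le> - 1/4 \<Longrightarrow> pp (s + x) - pp s \<le> - 1 / (6 * b)"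
proof -
  assume b: "0 < b" "1 / b \<le> vv s" "x \<le> - 1/4"
  have "(1/4) * (vv s * exp (- (1/4))) \<le> pp s - pp (s - 1/4)" by (rule pp_decr) simp
  moreover have "pp (s + x) \<le> pp (s - 1/4)" using b by (intro pp_mono) simp
  moreover have "1 / (6 * b) \<le> (1/4) * (vv s * exp (- (1/4)))"
  proof -
    have "1 / (6 * b) = (1/4) * ((1 / b) * (2/3))" by simp
    also have "\<dots> \<le> (1/4) * (vv s * exp (- (1/4)))"
      using b exp_quarter vv_pos[of s] by (intro mult_left_mono mult_mono) auto
    finally show ?thesis .
  qed
  ultimately show ?thesis by linarith
qed


lemma vv_ge_bb':
  assumes "k < n" "l < n" "k \<noteq> l"
  shows "1 / b_n n \<beta> \<le> vv (\<beta> k + \<beta> l)"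
proof (cases "k < l")
  case True
  then have "(k, l) \<in> pairs n" using assms by (simp add: pairs_def)
  then show ?thesis by (rule vv_ge_bb)
next
  case False
  then have "(l, k) \<in> pairs n" using assms by (simp add: pairs_def)
  then show ?thesis using vv_ge_bb[of l k n \<beta>] by (simp add: add.commute)
qed

lemma count_sums:
  fixes c c' :: real
  assumes i0: "i0 < n" and B: "B \<subseteq> {..<n}"
  shows "(\<Sum>l<n. (if l \<noteq> i0 then c else 0) - (if l \<in> B then c' else 0)) = (real n - 1) * c - real (card B) * c'"
proof -
  have f: "finite B" using B finite_subset by blast
  have 1: "(\<Sum>l<n. if l \<noteq> i0 then c else 0) = (real n - 1) * c"
  proof -
    have "(\<Sum>l<n. if l \<noteq> i0 then c else 0) = (\<Sum>l<n. c - (if l = i0 then c else 0))"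
      by (rule sum.cong) auto
    also have "\<dots> = real n * c - c" using i0 by (simp add: sum_subtractf)
    finally show ?thesis by (simp add: algebra_simps)
  qed
  have 2: "(\<Sum>l<n. if l \<in> B then c' else 0) = real (card B) * c'"
    using B f by (simp add: sum.If_cases Int_absorb1)
  show ?thesis using 1 2 by (simp add: sum_subtractf)
qed

lemma final_count:
  fixes b :: real
  assumes b: "0 < b" and n: "18 \<le> real n" and c: "9 * real cB \<le> real n"
  shows "real n / (9 * b) \<le> (real n - 1) * (1 / (6 * b)) - real cB * (5 / (12 * b))"
proof -
  have h: "real n / 9 \<le> (real n - 1) / 6 - real cB * 5 / 12" using n c by (simp add: field_simps)
  have "(1/b) * (real n / 9) \<le> (1/b) * ((real n - 1) / 6 - real cB * 5 / 12)"
    using b by (intro mult_left_mono[OF h]) simp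
  moreover have "real n / (9 * b) = (1/b) * (real n / 9)" by simp
  moreover have "(real n - 1) * (1 / (6 * b)) - real cB * (5 / (12 * b)) = (1/b) * ((real n - 1) / 6 - real cB * 5 / 12)"
    using b by (simp add: field_simps)
  ultimately show ?thesis by simp
qed


lemma linf:
  fixes \<beta> \<gamma> :: "nat \<Rightarrow> real" and t :: real
  assumes n18: "18 \<le> n"
    and bb4: "4 \<le> b_n n \<beta>"
    and mle: "\<And>\<delta>. loglik n E \<delta> \<le> loglik n E \<gamma>"
    and g: "\<And>i. i < n \<Longrightarrow> \<bar>gg n E \<beta> i\<bar> \<le> t"
    and cnt: "9 * card {i. i < n \<and> 1/2 \<le> \<bar>\<gamma> i - \<beta> i\<bar>} \<le> n"
    and tsmall: "t < real n / (9 * b_n n \<beta>)"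
    and j: "j < n"
  shows "\<bar>\<gamma> j - \<beta> j\<bar> < 1"
proof -
  let ?b = "b_n n \<beta>"
  define d where "d i = \<gamma> i - \<beta> i" for i
  define B where "B = {i. i < n \<and> 1/2 \<le> \<bar>d i\<bar>}"
  define th where "th = 1 / ?b"
  have b0: "0 < ?b" using bb4 by simp
  have th0: "0 < th" and th4: "th \<le> 1/4" using bb4 by (auto simp: th_def field_simps)
  have Bsub: "B \<subseteq> {..<n}" unfolding B_def by auto
  have cntB: "9 * real (card B) \<le> real n"
    using cnt unfolding B_def d_def by (metis (mono_tags, lifting) of_nat_le_iff of_nat_mult of_nat_numeral)
  have nr: "18 \<le> real n" using n18 by simp
  have fc: "real n / (9 * ?b) \<le> (real n - 1) * (1 / (6 * ?b)) - real (card B) * (5 / (12 * ?b))"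
    by (rule final_count[OF b0 nr cntB])
  obtain i0 where i0: "i0 < n" and i0max: "\<And>l. l < n \<Longrightarrow> \<bar>d l\<bar> \<le> \<bar>d i0\<bar>"
  proof -
    have ne: "(\<lambda>l. \<bar>d l\<bar>) ` {..<n} \<noteq> {}" using j by auto
    obtain i0 where "i0 \<in> {..<n}" "\<bar>d i0\<bar> = Max ((\<lambda>l. \<bar>d l\<bar>) ` {..<n})"
      using Max_in[OF _ ne] by auto
    then show ?thesis using that[of i0] Max_ge[of "(\<lambda>l. \<bar>d l\<bar>) ` {..<n}"] by auto
  qed
  have vb: "\<And>l. l < n \<Longrightarrow> l \<noteq> i0 \<Longrightarrow> 1 / ?b \<le> vv (\<beta> i0 + \<beta> l)"
    using i0 by (intro vv_ge_bb') auto
  have "\<bar>d i0\<bar> < 1"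
  proof (rule ccontr)
    assume "\<not> \<bar>d i0\<bar> < 1"
    then have big: "1 \<le> \<bar>d i0\<bar>" by simp
    show False
    proof (cases "0 \<le> d i0")
      case True
      let ?c = "\<lambda>l. \<gamma> i0 + \<gamma> l"
      have "loglik n E (\<gamma>(i0 := \<gamma> i0 - th)) - loglik n E \<gamma> \<le> 0" using mle[of "\<gamma>(i0 := \<gamma> i0 - th)"] by simp
      then have A: "(\<Sum>l<n. if l \<noteq> i0 then ((\<gamma> i0 - th + \<gamma> l) * ee E i0 l - psi (\<gamma> i0 - th + \<gamma> l)) - ((\<gamma> i0 + \<gamma> l) * ee E i0 l - psi (\<gamma> i0 + \<gamma> l)) else 0) \<le> 0"
        unfolding loglik_upd[OF i0] .
      have "(\<Sum>l<n. if l \<noteq> i0 then th * (pp (?c l - th) - ee E i0 l) else 0)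
          \<le> (\<Sum>l<n. if l \<noteq> i0 then ((\<gamma> i0 - th + \<gamma> l) * ee E i0 l - psi (\<gamma> i0 - th + \<gamma> l)) - ((\<gamma> i0 + \<gamma> l) * ee E i0 l - psi (\<gamma> i0 + \<gamma> l)) else 0)"
      proof (rule sum_mono)
        fix l assume "l \<in> {..<n}"
        have "th * pp (?c l - th) \<le> psi (?c l) - psi (?c l - th)" using psi_low th0 by simp
        moreover have "\<gamma> i0 - th + \<gamma> l = ?c l - th" by simp
        ultimately show "(if l \<noteq> i0 then th * (pp (?c l - th) - ee E i0 l) else 0)
          \<le> (if l \<noteq> i0 then ((\<gamma> i0 - th + \<gamma> l) * ee E i0 l - psi (\<gamma> i0 - th + \<gamma> l)) - ((\<gamma> i0 + \<gamma> l) * ee E i0 l - psi (\<gamma> i0 + \<gamma> l)) else 0)"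
          by (simp add: algebra_simps)
      qed
      also note A
      finally have "th * (\<Sum>l<n. if l \<noteq> i0 then pp (?c l - th) - ee E i0 l else 0) \<le> 0"
        by (simp add: sum_distrib_left if_distrib cong: if_cong)
      then have A2: "(\<Sum>l<n. if l \<noteq> i0 then pp (?c l - th) - ee E i0 l else 0) \<le> 0"
        using th0 by (simp add: mult_le_0_iff)
      have "(\<Sum>l<n. (if l \<noteq> i0 then 1 / (6 * ?b) else 0) - (if l \<in> B then 5 / (12 * ?b) else 0))
          \<le> (\<Sum>l<n. if l \<noteq> i0 then pp (?c l - th) - pp (\<beta> i0 + \<beta> l) else 0)"
      proof (rule sum_mono)
        fix l assume "l \<in> {..<n}"
        then have l: "l < n" by simp
        show "(if l \<noteq> i0 then 1 / (6 * ?b) else 0) - (if l \<in> B then 5 / (12 * ?b) else 0)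
          \<le> (if l \<noteq> i0 then pp (?c l - th) - pp (\<beta> i0 + \<beta> l) else 0)"
        proof (cases "l = i0")
          case True then show ?thesis using b0 by simp
        next
          case False
          have cl: "?c l - th = (\<beta> i0 + \<beta> l) + (d i0 + d l - th)" by (simp add: d_def)
          show ?thesis
          proof (cases "l \<in> B")
            case True
            have "- \<bar>d i0\<bar> \<le> d l" using i0max[OF l] by linarith
            then have x: "- th \<le> d i0 + d l - th" using \<open>0 \<le> d i0\<close> by linarith
            have "pp (\<beta> i0 + \<beta> l) - pp ((\<beta> i0 + \<beta> l) - th) \<le> th / 4" using pp_lip[of "(\<beta> i0 + \<beta> l) - th" "\<beta> i0 + \<beta> l"] th0 by simp
            moreover have "pp ((\<beta> i0 + \<beta> l) - th) \<le> pp (?c l - th)" unfolding cl using x by (intro pp_mono) simp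
            moreover have "1 / (6 * ?b) - 5 / (12 * ?b) = - (th / 4)" unfolding th_def using b0 by (simp add: field_simps)
            ultimately show ?thesis using False True by simp
          next
            case nB: False
            then have "\<bar>d l\<bar> < 1/2" using l unfolding B_def by auto
            then have x: "1/4 \<le> d i0 + d l - th" using big True th4 by linarith
            have "1 / (6 * ?b) \<le> pp (?c l - th) - pp (\<beta> i0 + \<beta> l)"
              unfolding cl by (rule pp_quarter_up[OF b0 vb[OF l False[symmetric, THEN not_sym]] x])
            then show ?thesis using False nB by simp
          qed
        qed
      qed
      also have "\<dots> = (\<Sum>l<n. if l \<noteq> i0 then ee E i0 l - pp (\<beta> i0 + \<beta> l) else 0)
          + (\<Sum>l<n. if l \<noteq> i0 then pp (?c l - th) - ee E i0 l else 0)"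
        by (simp add: sum.distrib[symmetric] if_distrib cong: if_cong)
      also have "\<dots> \<le> gg n E \<beta> i0" using A2 unfolding gg_def by simp
      finally have "(real n - 1) * (1 / (6 * ?b)) - real (card B) * (5 / (12 * ?b)) \<le> gg n E \<beta> i0"
        unfolding count_sums[OF i0 Bsub] .
      then show False using fc tsmall g[OF i0] by linarith
    next
      case False
      let ?c = "\<lambda>l. \<gamma> i0 + \<gamma> l"
      have "loglik n E (\<gamma>(i0 := \<gamma> i0 + th)) - loglik n E \<gamma> \<le> 0" using mle[of "\<gamma>(i0 := \<gamma> i0 + th)"] by simp
      then have A: "(\<Sum>l<n. if l \<noteq> i0 then ((\<gamma> i0 + th + \<gamma> l) * ee E i0 l - psi (\<gamma> i0 + th + \<gamma> l)) - ((\<gamma> i0 + \<gamma> l) * ee E i0 l - psi (\<gamma> i0 + \<gamma> l)) else 0) \<le> 0"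
        unfolding loglik_upd[OF i0] .
      have "(\<Sum>l<n. if l \<noteq> i0 then th * (ee E i0 l - pp (?c l + th)) else 0)
          \<le> (\<Sum>l<n. if l \<noteq> i0 then ((\<gamma> i0 + th + \<gamma> l) * ee E i0 l - psi (\<gamma> i0 + th + \<gamma> l)) - ((\<gamma> i0 + \<gamma> l) * ee E i0 l - psi (\<gamma> i0 + \<gamma> l)) else 0)"
      proof (rule sum_mono)
        fix l assume "l \<in> {..<n}"
        have "psi (?c l + th) - psi (?c l) \<le> th * pp (?c l + th)" using psi_up th0 by simp
        moreover have "\<gamma> i0 + th + \<gamma> l = ?c l + th" by simp
        ultimately show "(if l \<noteq> i0 then th * (ee E i0 l - pp (?c l + th)) else 0)
          \<le> (if l \<noteq> i0 then ((\<gamma> i0 + th + \<gamma> l) * ee E i0 l - psi (\<gamma> i0 + th + \<gamma> l)) - ((\<gamma> i0 + \<gamma> l) * ee E i0 l - psi (\<gamma> i0 + \<gamma> l)) else 0)"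
          by (simp add: algebra_simps)
      qed
      also note A
      finally have "th * (\<Sum>l<n. if l \<noteq> i0 then ee E i0 l - pp (?c l + th) else 0) \<le> 0"
        by (simp add: sum_distrib_left if_distrib cong: if_cong)
      then have A2: "(\<Sum>l<n. if l \<noteq> i0 then ee E i0 l - pp (?c l + th) else 0) \<le> 0"
        using th0 by (simp add: mult_le_0_iff)
      have "(\<Sum>l<n. if l \<noteq> i0 then pp (?c l + th) - pp (\<beta> i0 + \<beta> l) else 0)
          \<le> (\<Sum>l<n. (if l \<in> B then 5 / (12 * ?b) else 0) - (if l \<noteq> i0 then 1 / (6 * ?b) else 0))"
      proof (rule sum_mono)
        fix l assume "l \<in> {..<n}"
        then have l: "l < n" by simp
        show "(if l \<noteq> i0 then pp (?c l + th) - pp (\<beta> i0 + \<beta> l) else 0)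
           \<le> (if l \<in> B then 5 / (12 * ?b) else 0) - (if l \<noteq> i0 then 1 / (6 * ?b) else 0)"
        proof (cases "l = i0")
          case True then show ?thesis using b0 by simp
        next
          case False
          have cl: "?c l + th = (\<beta> i0 + \<beta> l) + (d i0 + d l + th)" by (simp add: d_def)
          show ?thesis
          proof (cases "l \<in> B")
            case True
            have "d l \<le> \<bar>d i0\<bar>" using i0max[OF l] by linarith
            then have x: "d i0 + d l + th \<le> th" using \<open>\<not> 0 \<le> d i0\<close> by linarith
            have "pp ((\<beta> i0 + \<beta> l) + th) - pp (\<beta> i0 + \<beta> l) \<le> th / 4" using pp_lip[of "\<beta> i0 + \<beta> l" "(\<beta> i0 + \<beta> l) + th"] th0 by simp
            moreover have "pp (?c l + th) \<le> pp ((\<beta> i0 + \<beta> l) + th)" unfolding cl using x by (intro pp_mono) simp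
            moreover have "5 / (12 * ?b) - 1 / (6 * ?b) = th / 4" unfolding th_def using b0 by (simp add: field_simps)
            ultimately show ?thesis using False True by simp
          next
            case nB: False
            then have "\<bar>d l\<bar> < 1/2" using l unfolding B_def by auto
            then have x: "d i0 + d l + th \<le> - 1/4" using big False \<open>\<not> 0 \<le> d i0\<close> th4 by linarith
            have "pp (?c l + th) - pp (\<beta> i0 + \<beta> l) \<le> - 1 / (6 * ?b)"
              unfolding cl by (rule pp_quarter_down[OF b0 vb[OF l False[symmetric, THEN not_sym]] x])
            then show ?thesis using False nB by simp
          qed
        qed
      qed
      then have C: "(\<Sum>l<n. if l \<noteq> i0 then pp (?c l + th) - pp (\<beta> i0 + \<beta> l) else 0)
          \<le> - ((real n - 1) * (1 / (6 * ?b)) - real (card B) * (5 / (12 * ?b)))"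
        using count_sums[OF i0 Bsub, of "1 / (6 * ?b)" "5 / (12 * ?b)"]
        by (simp add: sum_subtractf)
      have "gg n E \<beta> i0 = (\<Sum>l<n. if l \<noteq> i0 then ee E i0 l - pp (?c l + th) else 0)
          + (\<Sum>l<n. if l \<noteq> i0 then pp (?c l + th) - pp (\<beta> i0 + \<beta> l) else 0)"
        unfolding gg_def by (simp add: sum.distrib[symmetric] if_distrib cong: if_cong)
      then have "gg n E \<beta> i0 \<le> - ((real n - 1) * (1 / (6 * ?b)) - real (card B) * (5 / (12 * ?b)))"
        using A2 C by linarith
      then show False using fc tsmall g[OF i0] by linarith
    qed
  qed
  then show ?thesis using i0max[OF j] unfolding d_def by linarith
qed


lemma l2bound:
  fixes \<beta> \<gamma> :: "nat \<Rightarrow> real" and t :: real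
  assumes n3: "3 \<le> n" and b0: "0 < b_n n \<beta>"
    and d1: "\<And>i. i < n \<Longrightarrow> \<bar>\<gamma> i - \<beta> i\<bar> \<le> 1"
    and mle: "loglik n E \<beta> \<le> loglik n E \<gamma>"
    and g: "\<And>i. i < n \<Longrightarrow> \<bar>gg n E \<beta> i\<bar> \<le> t" and t0: "0 \<le> t"
  shows "l2dist n \<gamma> \<beta> \<le> 18 * b_n n \<beta> * sqrt (real n) * t / (real n - 2)"
proof -
  let ?b = "b_n n \<beta>"
  define d where "d i = \<gamma> i - \<beta> i" for i
  define S2 where "S2 = (\<Sum>i<n. (d i)^2)"
  define A where "A = (real n - 2) / (18 * ?b)"
  have A0: "0 < A" unfolding A_def using n3 b0 by simp
  have "0 \<le> (\<Sum>i<n. d i * gg n E \<beta> i) - (\<Sum>(k, l)\<in>pairs n. DD (\<beta> k + \<beta> l) (d k + d l))"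
    using loglik_diff[where \<gamma>=\<gamma> and \<beta>=\<beta> and n=n and E=E] mle unfolding d_def by simp
  moreover have "A * S2 \<le> (\<Sum>(k, l)\<in>pairs n. DD (\<beta> k + \<beta> l) (d k + d l))"
    unfolding A_def S2_def by (rule DD_sum_quad[OF b0]) (simp add: d_def d1)
  moreover have "(\<Sum>i<n. d i * gg n E \<beta> i) \<le> A * S2 / 2 + real n * t^2 / (2 * A)"
  proof -
    have "(\<Sum>i<n. d i * gg n E \<beta> i) \<le> (\<Sum>i<n. A * (d i)^2 / 2 + t^2 / (2 * A))"
    proof (rule sum_mono)
      fix i assume "i \<in> {..<n}"
      then have gi: "\<bar>gg n E \<beta> i\<bar> \<le> t" using g by simp
      have g2: "(gg n E \<beta> i)^2 \<le> t^2"
        using power_mono[OF gi abs_ge_zero, of 2] by simp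
      have "0 \<le> (A * d i - gg n E \<beta> i)^2 / (2 * A)" using A0 by simp
      also have "(A * d i - gg n E \<beta> i)^2 / (2 * A) = A * (d i)^2 / 2 - d i * gg n E \<beta> i + (gg n E \<beta> i)^2 / (2 * A)"
        using A0 by (simp add: power2_eq_square field_simps)
      finally have "d i * gg n E \<beta> i \<le> A * (d i)^2 / 2 + (gg n E \<beta> i)^2 / (2 * A)" by simp
      moreover have "(gg n E \<beta> i)^2 / (2 * A) \<le> t^2 / (2 * A)" using g2 A0 by (intro divide_right_mono) auto
      ultimately show "d i * gg n E \<beta> i \<le> A * (d i)^2 / 2 + t^2 / (2 * A)" by linarith
    qed
    also have "\<dots> = A * S2 / 2 + real n * t^2 / (2 * A)"
      unfolding S2_def by (simp add: sum.distrib sum_distrib_left sum_divide_distrib)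
    finally show ?thesis .
  qed
  ultimately have "A * S2 / 2 \<le> real n * t^2 / (2 * A)" by linarith
  then have "A * S2 * A \<le> real n * t^2" using A0 by (simp add: field_simps)
  then have "S2 \<le> real n * t^2 / A^2" using A0 by (simp add: field_simps power2_eq_square)
  then have "sqrt S2 \<le> sqrt (real n * t^2 / A^2)" by (rule real_sqrt_le_mono)
  also have "sqrt (real n * t^2 / A^2) = sqrt (real n) * t / A"
    using t0 A0 by (simp add: real_sqrt_mult real_sqrt_divide)
  also have "\<dots> = 18 * ?b * sqrt (real n) * t / (real n - 2)"
    unfolding A_def using n3 b0 by (simp add: field_simps)
  finally show ?thesis unfolding l2dist_def S2_def d_def .
qed

lemma loglik_restrict:
  assumes "\<And>i. i < n \<Longrightarrow> f i = h i"
  shows "loglik n E f = loglik n E h"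
  unfolding loglik_def using assms
  by (intro arg_cong2[where f = "(-)"] sum.cong) (auto simp: pairs_def)

lemma coord_cont: "continuous_on S (\<lambda>x::nat \<Rightarrow> real. x i)"
  by (rule continuous_on_subset[OF continuous_on_product_coordinates]) simp

lemma loglik_cont: "continuous_on S (loglik n E)"
proof -
  have "continuous_on S (\<lambda>\<gamma>. (\<Sum>i<n. \<gamma> i * real (Defs.degree n E i))
      - (\<Sum>(i, j)\<in>pairs n. ln (1 + exp (\<gamma> i + \<gamma> j))))"
    unfolding case_prod_unfold
    by (intro continuous_intros coord_cont) (auto simp: onepexp[THEN order_less_imp_not_eq2])
  then show ?thesis unfolding loglik_def[abs_def] .
qed

lemma mle_exists:
  fixes \<beta> :: "nat \<Rightarrow> real" and R :: real
  assumes R: "0 \<le> R"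
    and bnd: "\<And>\<delta> i. loglik n E \<beta> \<le> loglik n E \<delta> \<Longrightarrow> i < n \<Longrightarrow> \<bar>\<delta> i - \<beta> i\<bar> \<le> R"
  shows "\<exists>\<gamma>. is_MLE n E \<gamma>"
proof -
  define X where "X i = (if i < n then {\<beta> i - R .. \<beta> i + R} else {0})" for i
  define S where "S = PiE UNIV X"
  have "compactin (product_topology (\<lambda>_. euclidean) UNIV) S"
    unfolding S_def by (subst compactin_PiE) (auto simp: X_def)
  then have cS: "compact S" by (simp add: euclidean_product_topology)
  define rs where "rs f = (\<lambda>i. if i < n then f i else 0)" for f :: "nat \<Rightarrow> real"
  have rsl: "loglik n E (rs f) = loglik n E f" for f by (rule loglik_restrict) (simp add: rs_def)
  have bS: "rs \<beta> \<in> S" unfolding S_def rs_def X_def using R by auto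
  then have ne: "S \<noteq> {}" by auto
  obtain \<gamma> where "\<gamma> \<in> S" and gmax: "\<And>y. y \<in> S \<Longrightarrow> loglik n E y \<le> loglik n E \<gamma>"
    using continuous_attains_sup[OF cS ne loglik_cont[of S n E]] by auto
  have "is_MLE n E \<gamma>" unfolding is_MLE_def
  proof
    fix \<delta>
    show "loglik n E \<delta> \<le> loglik n E \<gamma>"
    proof (cases "loglik n E \<beta> \<le> loglik n E \<delta>")
      case True
      have "rs \<delta> \<in> S" unfolding S_def rs_def X_def using bnd[OF True] by (force simp: abs_le_iff)
      then show ?thesis using gmax rsl by metis
    next
      case False
      then show ?thesis using gmax[OF bS] rsl by (metis less_le_trans not_le order.strict_implies_order)
    qed
  qed
  then show ?thesis by blast
qed


lemma det:
  fixes \<beta> :: "nat \<Rightarrow> real" and t :: real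
  assumes n: "109 \<le> n" and t0: "0 \<le> t"
    and tK: "4 * t \<le> (real n / 27 - 4) / (12 * b_n n \<beta>)"
    and g: "\<And>i. i < n \<Longrightarrow> \<bar>gg n E \<beta> i\<bar> \<le> t"
  shows "(\<exists>\<gamma>. is_MLE n E \<gamma>) \<and>
    (\<forall>\<gamma>. is_MLE n E \<gamma> \<longrightarrow> l2dist n \<gamma> \<beta> \<le> 18 * b_n n \<beta> * sqrt (real n) * t / (real n - 2))"
proof -
  let ?b = "b_n n \<beta>"
  define K where "K = (real n / 27 - 4) / (12 * ?b)"
  have bb4: "4 \<le> ?b" using bb_facts[of n \<beta>] n by simp
  have b0: "0 < ?b" using bb4 by simp
  have nr: "109 \<le> real n" using n by simp
  have K0: "0 < K" unfolding K_def using b0 nr by (intro divide_pos_pos) auto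
  have tK': "4 * t \<le> K" using tK unfolding K_def .
  have key: "0 \<le> (\<Sum>i<n. (\<delta> i - \<beta> i) * gg n E \<beta> i - K * mm (\<delta> i - \<beta> i))"
    if le: "loglik n E \<beta> \<le> loglik n E \<delta>" for \<delta>
  proof -
    have "0 \<le> (\<Sum>i<n. (\<delta> i - \<beta> i) * gg n E \<beta> i) - (\<Sum>(k, l)\<in>pairs n. DD (\<beta> k + \<beta> l) ((\<delta> k - \<beta> k) + (\<delta> l - \<beta> l)))"
      using loglik_diff[where \<gamma>=\<delta> and \<beta>=\<beta> and n=n and E=E] le by simp
    moreover have "K * (\<Sum>i<n. mm (\<delta> i - \<beta> i)) \<le> (\<Sum>(k, l)\<in>pairs n. DD (\<beta> k + \<beta> l) ((\<delta> k - \<beta> k) + (\<delta> l - \<beta> l)))"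
      unfolding K_def by (rule DD_sum_m[OF b0])
    ultimately show ?thesis by (simp add: sum_subtractf sum_distrib_left)
  qed
  have ex: "\<exists>\<gamma>. is_MLE n E \<gamma>"
  proof (rule mle_exists[where R = "real n"])
    fix \<delta> i assume le: "loglik n E \<beta> \<le> loglik n E \<delta>" and i: "i < n"
    show "\<bar>\<delta> i - \<beta> i\<bar> \<le> real n"
      using w_lemma(2)[OF K0 t0 tK' g key[OF le] i] by simp
  qed simp
  have "l2dist n \<gamma> \<beta> \<le> 18 * ?b * sqrt (real n) * t / (real n - 2)" if mle: "is_MLE n E \<gamma>" for \<gamma>
  proof -
    have mleb: "loglik n E \<beta> \<le> loglik n E \<gamma>" and mlea: "\<And>\<delta>. loglik n E \<delta> \<le> loglik n E \<gamma>"
      using mle unfolding is_MLE_def by auto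
    have cnt: "9 * card {i. i < n \<and> 1/2 \<le> \<bar>\<gamma> i - \<beta> i\<bar>} \<le> n"
      using w_lemma(1)[OF K0 t0 tK' g key[OF mleb]] .
    have ts: "t < real n / (9 * ?b)"
    proof -
      have "t \<le> K / 4" using tK' by simp
      also have "K / 4 < real n / (9 * ?b)"
      proof -
        have "(real n / 27 - 4) / 48 < real n / 9" using nr by simp
        then have "(real n / 27 - 4) / 48 / ?b < real n / 9 / ?b" using b0 by (intro divide_strict_right_mono) auto
        then show ?thesis unfolding K_def by (simp add: field_simps)
      qed
      finally show ?thesis .
    qed
    have d1: "\<bar>\<gamma> i - \<beta> i\<bar> \<le> 1" if i: "i < n" for i
      using linf[OF _ bb4 mlea g cnt ts i] n by simp
    show ?thesis by (rule l2bound[OF _ b0 d1 mleb g t0]) (use n in auto)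
  qed
  then show ?thesis using ex by blast
qed


abbreviation qq :: "(nat \<Rightarrow> real) \<Rightarrow> nat \<times> nat \<Rightarrow> real" where
  "qq \<beta> x \<equiv> pp (\<beta> (fst x) + \<beta> (snd x))"

lemma edge_prob_pp: "edge_prob \<beta> i j = pp (\<beta> i + \<beta> j)"
  unfolding edge_prob_def pp_def ..

lemma graph_prob_alt: "graph_prob n \<beta> E = (\<Prod>x\<in>pairs n. if x \<in> E then qq \<beta> x else 1 - qq \<beta> x)"
  unfolding graph_prob_def edge_prob_pp case_prod_unfold by simp

lemma gp_nonneg: "0 \<le> graph_prob n \<beta> E"
  unfolding graph_prob_alt using pp_lt1 pp_pos by (intro prod_nonneg) (auto intro: less_imp_le)

lemma sum_gp:
  fixes F1 F0 :: "nat \<times> nat \<Rightarrow> real"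
  shows "(\<Sum>E\<in>Pow (pairs n). graph_prob n \<beta> E * (\<Prod>x\<in>pairs n. if x \<in> E then F1 x else F0 x))
    = (\<Prod>x\<in>pairs n. qq \<beta> x * F1 x + (1 - qq \<beta> x) * F0 x)"
proof -
  let ?P = "pairs n"
  have "(\<Prod>x\<in>?P. qq \<beta> x * F1 x + (1 - qq \<beta> x) * F0 x)
      = (\<Sum>X\<in>Pow ?P. (\<Prod>x\<in>X. qq \<beta> x * F1 x) * (\<Prod>x\<in>?P - X. (1 - qq \<beta> x) * F0 x))"
    by (rule prod_add[OF finite_pairs])
  also have "\<dots> = (\<Sum>E\<in>Pow ?P. graph_prob n \<beta> E * (\<Prod>x\<in>?P. if x \<in> E then F1 x else F0 x))"
  proof (rule sum.cong[OF refl])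
    fix X assume X: "X \<in> Pow ?P"
    have "graph_prob n \<beta> X * (\<Prod>x\<in>?P. if x \<in> X then F1 x else F0 x)
        = (\<Prod>x\<in>?P. if x \<in> X then qq \<beta> x * F1 x else (1 - qq \<beta> x) * F0 x)"
      unfolding graph_prob_alt prod.distrib[symmetric] by (rule prod.cong) auto
    also have "\<dots> = (\<Prod>x\<in>X. qq \<beta> x * F1 x) * (\<Prod>x\<in>?P - X. (1 - qq \<beta> x) * F0 x)"
      using X finite_pairs[of n] by (simp add: prod.If_cases Int_absorb1 Diff_eq)
    finally show "(\<Prod>x\<in>X. qq \<beta> x * F1 x) * (\<Prod>x\<in>?P - X. (1 - qq \<beta> x) * F0 x)
        = graph_prob n \<beta> X * (\<Prod>x\<in>?P. if x \<in> X then F1 x else F0 x)" by simp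
  qed
  finally show ?thesis by simp
qed

lemma sum_gp_one: "(\<Sum>E\<in>Pow (pairs n). graph_prob n \<beta> E) = 1"
  using sum_gp[of n \<beta> "\<lambda>_. 1" "\<lambda>_. 1"] by simp

lemma beta_prob_alt: "beta_prob n \<beta> Q = (\<Sum>E\<in>Pow (pairs n). if Q E then graph_prob n \<beta> E else 0)"
proof -
  have "{E. E \<subseteq> pairs n \<and> Q E} = Pow (pairs n) \<inter> {E. Q E}" by auto
  then show ?thesis unfolding beta_prob_def using finite_pairs[of n]
    by (simp add: sum.inter_restrict)
qed

lemma gg_pairs:
  assumes E: "E \<subseteq> pairs n" and i: "i < n"
  shows "gg n E \<beta> i = (\<Sum>x\<in>pairs n. if fst x = i \<or> snd x = i then (if x \<in> E then 1 else 0) - qq \<beta> x else 0)"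
proof -
  define F where "F k l = ee E k l - pp (\<beta> k + \<beta> l)" for k l
  have sym: "F k l = F l k" for k l unfolding F_def by (simp add: ee_sym[of E k l] add.commute)
  have "gg n E \<beta> i = (\<Sum>l<n. if l \<noteq> i then F i l else 0)" unfolding gg_def F_def ..
  also have "\<dots> = (\<Sum>(k, l)\<in>pairs n. if k = i \<or> l = i then F k l else 0)" by (rule star_sum[OF sym i, symmetric])
  also have "\<dots> = (\<Sum>x\<in>pairs n. if fst x = i \<or> snd x = i then (if x \<in> E then 1 else 0) - qq \<beta> x else 0)"
    unfolding case_prod_unfold
  proof (rule sum.cong[OF refl])
    fix x assume x: "x \<in> pairs n"
    then have "(snd x, fst x) \<notin> E" using E by (auto simp: pairs_def)
    then show "(if fst x = i \<or> snd x = i then F (fst x) (snd x) else 0)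
      = (if fst x = i \<or> snd x = i then (if x \<in> E then 1 else 0) - qq \<beta> x else 0)"
      unfolding F_def ee_def by auto
  qed
  finally show ?thesis .
qed

lemma card_star: "i < n \<Longrightarrow> (\<Sum>x\<in>pairs n. if fst x = i \<or> snd x = i then 1 else 0 :: real) = real n - 1"
proof -
  assume i: "i < n"
  have "(\<Sum>x\<in>pairs n. if fst x = i \<or> snd x = i then 1 else 0 :: real) = (\<Sum>(k, l)\<in>pairs n. if k = i \<or> l = i then 1 else 0)"
    by (simp add: case_prod_unfold)
  also have "\<dots> = (\<Sum>l<n. if l \<noteq> i then 1 else 0)" by (rule star_sum[where F = "\<lambda>_ _. 1", OF refl i])
  also have "\<dots> = (\<Sum>l<n. 1 - (if l = i then 1 else 0))" by (rule sum.cong) auto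
  also have "\<dots> = real n - 1" using i by (simp add: sum_subtractf)
  finally show ?thesis .
qed


lemma exp_quad: assumes "\<bar>y\<bar> \<le> 1" shows "exp (y::real) \<le> 1 + y + y^2"
proof (cases "0 \<le> y")
  case True then show ?thesis using exp_bound[of y] assms by simp
next
  case False
  define u where "u = - y"
  have u: "0 < u" "u \<le> 1" using False assms by (auto simp: u_def)
  have "1 + u \<le> exp u" by (rule exp_ge_add_one_self)
  have "exp y = 1 / exp u" unfolding u_def by (simp add: exp_minus inverse_eq_divide)
  also have "\<dots> \<le> 1 / (1 + u)" using \<open>1 + u \<le> exp u\<close> u by (intro divide_left_mono) (auto intro: mult_pos_pos)
  also have "1 / (1 + u) \<le> 1 - u + u^2"
  proof -
    have "1 \<le> (1 + u) * (1 - u + u^2)" using u by (simp add: algebra_simps power2_eq_square power3_eq_cube)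
    then show ?thesis using u by (simp add: field_simps)
  qed
  finally show ?thesis by (simp add: u_def)
qed

lemma bern_mgf:
  fixes q l :: real
  assumes q: "0 \<le> q" "q \<le> 1" and l: "\<bar>l\<bar> \<le> 1"
  shows "q * exp (l * (1 - q)) + (1 - q) * exp (- l * q) \<le> exp (l^2 / 4)"
proof -
  have a1: "\<bar>l * (1 - q)\<bar> \<le> 1" using q l by (auto simp: abs_mult intro: mult_le_one)
  have a2: "\<bar>- l * q\<bar> \<le> 1" using q l by (auto simp: abs_mult intro: mult_le_one)
  have "q * exp (l * (1 - q)) + (1 - q) * exp (- l * q)
      \<le> q * (1 + l * (1 - q) + (l * (1 - q))^2) + (1 - q) * (1 + (- l * q) + (- l * q)^2)"
    using q exp_quad[OF a1] exp_quad[OF a2] by (intro add_mono mult_left_mono) auto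
  also have "\<dots> = 1 + l^2 * (q * (1 - q))" by (simp add: algebra_simps power2_eq_square)
  also have "\<dots> \<le> 1 + l^2 / 4"
  proof -
    have "q * (1 - q) \<le> 1/4" using sum_squares_ge_zero[of "q - 1/2" 0] by (simp add: algebra_simps power2_eq_square)
    then have "l^2 * (q * (1 - q)) \<le> l^2 * (1/4)" by (intro mult_left_mono) auto
    then show ?thesis by simp
  qed
  also have "\<dots> \<le> exp (l^2 / 4)" by (rule exp_ge_add_one_self[of "l^2/4", simplified add.commute])
  finally show ?thesis .
qed

lemma mgf_bound:
  assumes i: "i < n" and l: "\<bar>l\<bar> \<le> 1"
  shows "(\<Sum>E\<in>Pow (pairs n). graph_prob n \<beta> E * exp (l * gg n E \<beta> i)) \<le> exp (l^2 * (real n - 1) / 4)"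
proof -
  let ?P = "pairs n"
  define h where "h x = (if fst x = i \<or> snd x = i then 1 else 0 :: real)" for x
  have "(\<Sum>E\<in>Pow ?P. graph_prob n \<beta> E * exp (l * gg n E \<beta> i))
      = (\<Sum>E\<in>Pow ?P. graph_prob n \<beta> E * (\<Prod>x\<in>?P. if x \<in> E then exp (l * h x * (1 - qq \<beta> x)) else exp (- l * h x * qq \<beta> x)))"
  proof (rule sum.cong[OF refl])
    fix E assume "E \<in> Pow ?P"
    then have E: "E \<subseteq> ?P" by simp
    have "exp (l * gg n E \<beta> i) = exp (\<Sum>x\<in>?P. l * (if fst x = i \<or> snd x = i then (if x \<in> E then 1 else 0) - qq \<beta> x else 0))"
      unfolding gg_pairs[OF E i] by (simp add: sum_distrib_left)
    also have "\<dots> = (\<Prod>x\<in>?P. exp (l * (if fst x = i \<or> snd x = i then (if x \<in> E then 1 else 0) - qq \<beta> x else 0)))"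
      by (rule exp_sum[OF finite_pairs])
    also have "\<dots> = (\<Prod>x\<in>?P. if x \<in> E then exp (l * h x * (1 - qq \<beta> x)) else exp (- l * h x * qq \<beta> x))"
      by (rule prod.cong) (auto simp: h_def)
    finally show "graph_prob n \<beta> E * exp (l * gg n E \<beta> i) = graph_prob n \<beta> E * (\<Prod>x\<in>?P. if x \<in> E then exp (l * h x * (1 - qq \<beta> x)) else exp (- l * h x * qq \<beta> x))"
      by simp
  qed
  also have "\<dots> = (\<Prod>x\<in>?P. qq \<beta> x * exp (l * h x * (1 - qq \<beta> x)) + (1 - qq \<beta> x) * exp (- l * h x * qq \<beta> x))"
    by (rule sum_gp)
  also have "\<dots> \<le> (\<Prod>x\<in>?P. exp (l^2 / 4 * h x))"
  proof (rule prod_mono, safe)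
    fix x assume "x \<in> ?P"
    have q: "0 \<le> qq \<beta> x" "qq \<beta> x \<le> 1" using pp_pos pp_lt1 by (auto intro: less_imp_le)
    show "0 \<le> qq \<beta> x * exp (l * h x * (1 - qq \<beta> x)) + (1 - qq \<beta> x) * exp (- l * h x * qq \<beta> x)"
      using q by (intro add_nonneg_nonneg mult_nonneg_nonneg) auto
    show "qq \<beta> x * exp (l * h x * (1 - qq \<beta> x)) + (1 - qq \<beta> x) * exp (- l * h x * qq \<beta> x) \<le> exp (l^2 / 4 * h x)"
      using bern_mgf[OF q l] by (auto simp: h_def)
  qed
  also have "\<dots> = exp (\<Sum>x\<in>?P. l^2 / 4 * h x)" by (rule exp_sum[OF finite_pairs, symmetric])
  also have "(\<Sum>x\<in>?P. l^2 / 4 * h x) = l^2 / 4 * (real n - 1)"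
    unfolding sum_distrib_left[symmetric] h_def using card_star[OF i] by simp
  finally show ?thesis by (simp add: mult_ac)
qed

lemma tail_bound:
  fixes s :: real
  assumes i: "i < n" and l: "0 \<le> l" "l \<le> 1" and s: "\<bar>s\<bar> = 1"
  shows "beta_prob n \<beta> (\<lambda>E. t \<le> s * gg n E \<beta> i) \<le> exp (- l * t + l^2 * (real n - 1) / 4)"
proof -
  have "beta_prob n \<beta> (\<lambda>E. t \<le> s * gg n E \<beta> i)
      \<le> (\<Sum>E\<in>Pow (pairs n). graph_prob n \<beta> E * exp (l * (s * gg n E \<beta> i - t)))"
    unfolding beta_prob_alt
  proof (rule sum_mono)
    fix E
    show "(if t \<le> s * gg n E \<beta> i then graph_prob n \<beta> E else 0) \<le> graph_prob n \<beta> E * exp (l * (s * gg n E \<beta> i - t))"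
    proof (cases "t \<le> s * gg n E \<beta> i")
      case True
      then have "1 \<le> exp (l * (s * gg n E \<beta> i - t))" using l by simp
      then show ?thesis using True gp_nonneg[of n \<beta> E]
        by (simp add: mult_le_cancel_left1)
    qed (simp add: gp_nonneg)
  qed
  also have "\<dots> = exp (- l * t) * (\<Sum>E\<in>Pow (pairs n). graph_prob n \<beta> E * exp ((s * l) * gg n E \<beta> i))"
    by (simp add: sum_distrib_left algebra_simps exp_diff exp_minus field_simps)
  also have "\<dots> \<le> exp (- l * t) * exp ((s * l)^2 * (real n - 1) / 4)"
    using s l by (intro mult_left_mono mgf_bound[OF i]) (auto simp: abs_mult)
  also have "(s * l)^2 = l^2"
  proof -
    have "s * s = 1" using abs_mult_self_eq[of s] s by simp
    then show ?thesis by (simp add: power2_eq_square algebra_simps)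
  qed
  finally show ?thesis by (simp add: exp_add[symmetric])
qed


lemma expo_aux: fixes m t :: real assumes "0 < m" shows "- (2 * t / m) * t + (2 * t / m)^2 * m / 4 = - (t^2) / m"
  using assms by (simp add: field_simps power2_eq_square)

lemma expo_aux2: fixes m L :: real assumes "0 < m" shows "- (2 * m * L) / m = - 2 * L"
  using assms by (simp add: field_simps)

lemma exp_m2ln: fixes x :: real assumes "0 < x" shows "exp (- 2 * ln x) = 1 / x^2"
proof -
  have "exp (- 2 * ln x) = exp (- (ln x + ln x))" by simp
  also have "\<dots> = inverse (exp (ln x + ln x))" by (rule exp_minus)
  also have "exp (ln x + ln x) = x * x" by (simp only: exp_add exp_ln[OF assms])
  finally show ?thesis by (simp add: power2_eq_square inverse_eq_divide)
qed

lemma exponent_calc: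
  assumes n2: "2 \<le> n" and t: "t = sqrt (2 * (real n - 1) * ln (real n))"
  defines "l \<equiv> 2 * t / (real n - 1)"
  shows "exp (- l * t + l^2 * (real n - 1) / 4) = 1 / (real n)^2"
proof -
  have n1: "0 < real n - 1" using n2 by simp
  have ln0: "0 \<le> ln (real n)" using n2 by simp
  have "0 \<le> 2 * (real n - 1) * ln (real n)" using n1 ln0 by simp
  then have t2: "t^2 = 2 * (real n - 1) * ln (real n)" unfolding t by (rule real_sqrt_pow2)
  have "- l * t + l^2 * (real n - 1) / 4 = - (t^2) / (real n - 1)"
    unfolding l_def by (rule expo_aux[OF n1])
  also have "\<dots> = - 2 * ln (real n)" unfolding t2 by (rule expo_aux2[OF n1])
  finally show ?thesis using exp_m2ln[of "real n"] n2 by simp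
qed

lemma prob_good:
  fixes \<beta> :: "nat \<Rightarrow> real" and t :: real
  assumes n2: "2 \<le> n" and t: "t = sqrt (2 * (real n - 1) * ln (real n))"
    and tl: "2 * t \<le> real n - 1"
    and Q: "\<And>E. E \<subseteq> pairs n \<Longrightarrow> (\<forall>i<n. \<bar>gg n E \<beta> i\<bar> < t) \<Longrightarrow> Q E"
  shows "1 - 2 / real n \<le> beta_prob n \<beta> Q"
proof -
  let ?P = "pairs n"
  let ?G = "\<lambda>E. \<forall>i<n. \<bar>gg n E \<beta> i\<bar> < t"
  define l where "l = 2 * t / (real n - 1)"
  have n1: "0 < real n - 1" using n2 by simp
  have "0 \<le> 2 * (real n - 1) * ln (real n)" using n2 by simp
  then have t0: "0 \<le> t" using t by simp
  have l0: "0 \<le> l" "l \<le> 1" unfolding l_def using t0 n1 tl by (auto simp: field_simps)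
  have ex: "exp (- l * t + l^2 * (real n - 1) / 4) = 1 / (real n)^2"
    unfolding l_def by (rule exponent_calc[OF n2 t])
  have tail: "beta_prob n \<beta> (\<lambda>E. t \<le> s * gg n E \<beta> i) \<le> 1 / (real n)^2" if "i < n" "\<bar>s\<bar> = 1" for i s
    using tail_bound[OF that(1) l0 that(2), of \<beta> t] unfolding ex .
  have "(\<Sum>E\<in>Pow ?P. if \<not> ?G E then graph_prob n \<beta> E else 0)
      \<le> (\<Sum>E\<in>Pow ?P. \<Sum>i<n. (if t \<le> 1 * gg n E \<beta> i then graph_prob n \<beta> E else 0)
                          + (if t \<le> (-1) * gg n E \<beta> i then graph_prob n \<beta> E else 0))"
  proof (rule sum_mono)
    fix E
    show "(if \<not> ?G E then graph_prob n \<beta> E else 0) \<le> (\<Sum>i<n. (if t \<le> 1 * gg n E \<beta> i then graph_prob n \<beta> E else 0)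
                          + (if t \<le> (-1) * gg n E \<beta> i then graph_prob n \<beta> E else 0))"
    proof (cases "?G E")
      case True then show ?thesis using gp_nonneg[of n \<beta> E] by (simp add: sum_nonneg)
    next
      case False
      then obtain i0 where i0: "i0 < n" "t \<le> \<bar>gg n E \<beta> i0\<bar>" by (auto simp: not_less)
      have "graph_prob n \<beta> E \<le> (if t \<le> 1 * gg n E \<beta> i0 then graph_prob n \<beta> E else 0)
                          + (if t \<le> (-1) * gg n E \<beta> i0 then graph_prob n \<beta> E else 0)"
        using i0(2) gp_nonneg[of n \<beta> E] by (auto simp: abs_if split: if_splits)
      also have "\<dots> \<le> (\<Sum>i<n. (if t \<le> 1 * gg n E \<beta> i then graph_prob n \<beta> E else 0)
                          + (if t \<le> (-1) * gg n E \<beta> i then graph_prob n \<beta> E else 0))"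
        using i0(1) gp_nonneg[of n \<beta> E] by (intro member_le_sum) auto
      finally show ?thesis using False by simp
    qed
  qed
  also have "\<dots> = (\<Sum>i<n. beta_prob n \<beta> (\<lambda>E. t \<le> 1 * gg n E \<beta> i) + beta_prob n \<beta> (\<lambda>E. t \<le> (-1) * gg n E \<beta> i))"
    unfolding beta_prob_alt by (subst sum.swap) (simp add: sum.distrib)
  also have "\<dots> \<le> (\<Sum>i<n. 1 / (real n)^2 + 1 / (real n)^2)"
    by (intro sum_mono add_mono tail) auto
  also have "\<dots> = 2 / real n" using n2 by (simp add: power2_eq_square)
  finally have bad: "(\<Sum>E\<in>Pow ?P. if \<not> ?G E then graph_prob n \<beta> E else 0) \<le> 2 / real n" .
  have split: "(\<Sum>E\<in>Pow ?P. if ?G E then graph_prob n \<beta> E else 0) + (\<Sum>E\<in>Pow ?P. if \<not> ?G E then graph_prob n \<beta> E else 0) = 1"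
  proof -
    have "(\<Sum>E\<in>Pow ?P. if ?G E then graph_prob n \<beta> E else 0) + (\<Sum>E\<in>Pow ?P. if \<not> ?G E then graph_prob n \<beta> E else 0)
        = (\<Sum>E\<in>Pow ?P. (if ?G E then graph_prob n \<beta> E else 0) + (if \<not> ?G E then graph_prob n \<beta> E else 0))"
      by (rule sum.distrib[symmetric])
    also have "\<dots> = (\<Sum>E\<in>Pow ?P. graph_prob n \<beta> E)" by (rule sum.cong) auto
    finally show ?thesis using sum_gp_one[of n \<beta>] by simp
  qed
  have "(\<Sum>E\<in>Pow ?P. if ?G E then graph_prob n \<beta> E else 0) \<le> beta_prob n \<beta> Q"
    unfolding beta_prob_alt
    by (rule sum_mono) (use Q gp_nonneg in auto)
  then show ?thesis using bad split by linarith
qed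


lemma ln_bound: assumes "289 \<le> (x::real)" shows "8 * ln x \<le> x - 1"
proof -
  define r where "r = sqrt x"
  have r17: "17 \<le> r" unfolding r_def using real_sqrt_le_mono[OF assms] by simp
  have x: "x = r^2" unfolding r_def using assms by simp
  have "ln x = 2 * ln r" unfolding x using r17 by (simp add: ln_realpow)
  also have "\<dots> \<le> 2 * (r - 1)" using ln_le_minus_one[of r] r17 by simp
  finally have "8 * ln x \<le> 16 * r - 16" by simp
  moreover have "16 * r \<le> r^2 - 1"
  proof -
    have "17 * r \<le> r * r" using r17 by (intro mult_right_mono) auto
    then show ?thesis using r17 unfolding power2_eq_square by linarith
  qed
  ultimately show ?thesis unfolding x by simp
qed

lemma final_const:
  fixes n :: nat and b :: real
  assumes n5: "5 \<le> n" and b: "0 < b"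
  shows "18 * b * sqrt (real n) * sqrt (2 * (real n - 1) * ln (real n)) / (real n - 2) \<le> 54 * b * sqrt (ln (real n))"
proof -
  have n: "5 \<le> real n" using n5 by simp
  have ln0: "0 \<le> ln (real n)" using n by simp
  have "2 * real n * (real n - 1) \<le> 9 * (real n - 2)^2"
  proof -
    have "35 * real n \<le> 7 * real n * real n" using n by (intro mult_right_mono) auto
    then show ?thesis by (simp add: power2_eq_square algebra_simps)
  qed
  then have A: "(2 * real n * (real n - 1)) * ln (real n) \<le> (9 * (real n - 2)^2) * ln (real n)"
    by (rule mult_right_mono[OF _ ln0])
  have "real n * (2 * (real n - 1) * ln (real n)) = (2 * real n * (real n - 1)) * ln (real n)"
    by (simp add: algebra_simps)
  also note A
  also have "(9 * (real n - 2)^2) * ln (real n) = (3 * (real n - 2))^2 * ln (real n)"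
    unfolding power2_eq_square by (simp add: algebra_simps)
  finally have "real n * (2 * (real n - 1) * ln (real n)) \<le> (3 * (real n - 2))^2 * ln (real n)" .
  then have "sqrt (real n * (2 * (real n - 1) * ln (real n))) \<le> sqrt ((3 * (real n - 2))^2 * ln (real n))"
    by (rule real_sqrt_le_mono)
  also have "\<dots> = 3 * (real n - 2) * sqrt (ln (real n))" using n by (simp add: real_sqrt_mult)
  finally have h: "sqrt (real n) * sqrt (2 * (real n - 1) * ln (real n)) \<le> 3 * (real n - 2) * sqrt (ln (real n))"
    by (simp add: real_sqrt_mult)
  have "18 * b * (sqrt (real n) * sqrt (2 * (real n - 1) * ln (real n))) \<le> 18 * b * (3 * (real n - 2) * sqrt (ln (real n)))"
    using h b by (intro mult_left_mono) auto
  then have "18 * b * (sqrt (real n) * sqrt (2 * (real n - 1) * ln (real n))) / (real n - 2) \<le> 18 * b * (3 * (real n - 2) * sqrt (ln (real n))) / (real n - 2)"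
    using n by (intro divide_right_mono) auto
  also have "\<dots> = 54 * b * sqrt (ln (real n))" using n by (simp add: field_simps)
  finally show ?thesis by (simp add: mult_ac)
qed


lemma per_n:
  fixes \<beta> :: "nat \<Rightarrow> real" and n :: nat
  assumes n: "289 \<le> n"
    and H: "\<bar>(b_n n \<beta>)^2 / c_n n \<beta>\<bar> \<le> (1/5184) * \<bar>sqrt (real n / ln (real n))\<bar>"
  shows "1 - 2 / real n \<le> beta_prob n \<beta> (\<lambda>E. (\<exists>\<gamma>. is_MLE n E \<gamma>) \<and>
               (\<forall>\<gamma>. is_MLE n E \<gamma> \<longrightarrow> l2dist n \<gamma> \<beta> \<le> 54 * b_n n \<beta> * sqrt (ln (real n))))"
proof -
  let ?b = "b_n n \<beta>" and ?c = "c_n n \<beta>"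
  define t where "t = sqrt (2 * (real n - 1) * ln (real n))"
  have nr: "289 \<le> real n" using n by simp
  have bf: "4 \<le> ?b" "4 \<le> ?c" "?c \<le> ?b" using bb_facts[of n \<beta>] n by auto
  have b0: "0 < ?b" and c0: "0 < ?c" using bf by auto
  have ln0: "0 < ln (real n)" using nr by simp
  have "?b \<le> ?b^2 / ?c"
  proof -
    have "?b * ?c \<le> ?b * ?b" using bf b0 by (intro mult_left_mono) auto
    then show ?thesis using c0 by (simp add: le_divide_eq power2_eq_square mult.commute)
  qed
  also have "?b^2 / ?c \<le> (1/5184) * sqrt (real n / ln (real n))"
  proof -
    have "0 \<le> sqrt (real n / ln (real n))" using ln0 by simp
    moreover have "0 \<le> ?b^2 / ?c" using c0 by simp
    ultimately show ?thesis using H c0 by (simp add: abs_of_pos)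
  qed
  finally have bsm: "?b \<le> (1/5184) * sqrt (real n / ln (real n))" .
  have t0: "0 \<le> t" unfolding t_def using nr ln0 by simp
  have bt: "?b * t \<le> (1/5184) * (2 * real n)"
  proof -
    have "?b * t \<le> (1/5184) * sqrt (real n / ln (real n)) * t" using bsm t0 by (intro mult_right_mono) auto
    also have "\<dots> = (1/5184) * (sqrt (real n / ln (real n)) * t)" by (rule mult.assoc)
    also have "sqrt (real n / ln (real n)) * t = sqrt (real n / ln (real n) * (2 * (real n - 1) * ln (real n)))"
      unfolding t_def by (rule real_sqrt_mult[symmetric])
    also have "real n / ln (real n) * (2 * (real n - 1) * ln (real n)) = 2 * real n * (real n - 1)"
      using ln0 by (simp add: field_simps)
    also have "sqrt (2 * real n * (real n - 1)) \<le> sqrt ((2 * real n)^2)"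
      using nr by (intro real_sqrt_le_mono) (simp add: power2_eq_square algebra_simps)
    also have "\<dots> = 2 * real n" by (simp only: real_sqrt_abs abs_of_nonneg)
    finally show ?thesis by simp
  qed
  have tK: "4 * t \<le> (real n / 27 - 4) / (12 * ?b)"
  proof -
    have "48 * (?b * t) \<le> real n / 27 - 4" using bt nr by simp
    then have "(4 * t) * (12 * ?b) \<le> real n / 27 - 4" by (simp add: algebra_simps)
    then show ?thesis using b0 by (simp add: pos_le_divide_eq)
  qed
  have tl: "2 * t \<le> real n - 1"
  proof -
    have l8: "8 * ln (real n) \<le> real n - 1" by (rule ln_bound[OF nr])
    have "2 * t = sqrt (4 * (2 * (real n - 1) * ln (real n)))" unfolding t_def by (simp add: real_sqrt_mult)
    also have "\<dots> \<le> sqrt ((real n - 1)^2)"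
    proof (rule real_sqrt_le_mono)
      have "(real n - 1) * (8 * ln (real n)) \<le> (real n - 1) * (real n - 1)"
        using l8 nr by (intro mult_left_mono) auto
      then show "4 * (2 * (real n - 1) * ln (real n)) \<le> (real n - 1)^2" by (simp add: power2_eq_square algebra_simps)
    qed
    also have "\<dots> = real n - 1" using nr by simp
    finally show ?thesis .
  qed
  show ?thesis
  proof (rule prob_good[OF _ t_def tl])
    show "2 \<le> n" using n by simp
    fix E assume E: "E \<subseteq> pairs n" and G: "\<forall>i<n. \<bar>gg n E \<beta> i\<bar> < t"
    have n109: "109 \<le> n" using n by simp
    have D: "(\<exists>\<gamma>. is_MLE n E \<gamma>) \<and>
      (\<forall>\<gamma>. is_MLE n E \<gamma> \<longrightarrow> l2dist n \<gamma> \<beta> \<le> 18 * ?b * sqrt (real n) * t / (real n - 2))"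
      by (rule det[OF n109 t0 tK]) (use G in auto)
    have fc: "18 * ?b * sqrt (real n) * t / (real n - 2) \<le> 54 * ?b * sqrt (ln (real n))"
      unfolding t_def by (rule final_const) (use n b0 in auto)
    show "(\<exists>\<gamma>. is_MLE n E \<gamma>) \<and> (\<forall>\<gamma>. is_MLE n E \<gamma> \<longrightarrow> l2dist n \<gamma> \<beta> \<le> 54 * ?b * sqrt (ln (real n)))"
      using D fc by auto
  qed
qed

theorem mainTheorem14:
  "\<exists>C>0. \<forall>\<beta> :: nat \<Rightarrow> nat \<Rightarrow> real.
     (\<lambda>n. (b_n n (\<beta> n))^2 / c_n n (\<beta> n)) \<in> o(\<lambda>n. sqrt (real n / ln (real n))) \<longrightarrow>
     (\<forall>\<^sub>F n in at_top.
        beta_prob n (\<beta> n)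
          (\<lambda>E. (\<exists>\<gamma>. is_MLE n E \<gamma>) \<and>
               (\<forall>\<gamma>. is_MLE n E \<gamma> \<longrightarrow>
                   l2dist n \<gamma> (\<beta> n) \<le> C * b_n n (\<beta> n) * sqrt (ln (real n))))
        \<ge> 1 - 2 / real n)"
proof (intro exI[of _ "54::real"] conjI allI impI)
  show "0 < (54::real)" by simp
  fix \<beta> :: "nat \<Rightarrow> nat \<Rightarrow> real"
  assume H: "(\<lambda>n. (b_n n (\<beta> n))^2 / c_n n (\<beta> n)) \<in> o(\<lambda>n. sqrt (real n / ln (real n)))"
  have ev1: "\<forall>\<^sub>F n in at_top. \<bar>(b_n n (\<beta> n))^2 / c_n n (\<beta> n)\<bar> \<le> (1/5184) * \<bar>sqrt (real n / ln (real n))\<bar>"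
    using landau_o.smallD[OF H, of "1/5184"] by simp
  have ev2: "\<forall>\<^sub>F n in at_top. 289 \<le> (n::nat)" by (rule eventually_ge_at_top)
  show "\<forall>\<^sub>F n in at_top.
        beta_prob n (\<beta> n)
          (\<lambda>E. (\<exists>\<gamma>. is_MLE n E \<gamma>) \<and>
               (\<forall>\<gamma>. is_MLE n E \<gamma> \<longrightarrow>
                   l2dist n \<gamma> (\<beta> n) \<le> 54 * b_n n (\<beta> n) * sqrt (ln (real n))))
        \<ge> 1 - 2 / real n"
    using ev1 ev2
  proof eventually_elim
    case (elim n)
    show ?case by (rule per_n[OF elim(2) elim(1)])
  qed
qed


end
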